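(* Let $n\ge2$. The homomorphism $\phi:\mathrm{Br}(\mathrm{C}_n)\to\mathrm{SBr}(\mathrm{A}_{2n-1})$ determined by $\phi(r_0)=R_n$, $\phi(e_0)=E_n$, $\phi(r_i)=R_{n-i}R_{n+i}$, $\phi(e_i)=E_{n-i}E_{n+i}$ ($0<i<n$) is surjective.
   Context: Let $R$ be a commutative ring with an invertible element $\delta$, and $n\ge1$. The Brauer algebra of type $\mathrm{C}_n$, $\mathrm{Br}(\mathrm{C}_n,R,\delta)$, is the unital associative $R$-algebra generated by $r_0,\dots,r_{n-1},e_0,\dots,e_{n-1}$ subject to the following relations, where for distinct $i,j\in\{0,\dots,n-1\}$ we write $i\sim j$ if $|i-j|=1$ and $i\nsim j$ otherwise: $r_i^2=1$ and $r_ie_i=e_ir_i=e_i$ for all $i$; $e_i^2=\delta^2e_i$ for $i>0$; $e_0^2=\delta e_0$; $r_ir_j=r_jr_i$, $e_ir_j=r_je_i$, $e_ie_j=e_je_i$ for $i\nsim j$; $r_ir_jr_i=r_jr_ir_j$, $r_jr_ie_j=e_ie_j$, $r_ie_jr_i=r_je_ir_j$ for $i\sim j$ with $i,j>0$; and $r_1r_0r_1r_0=r_0r_1r_0r_1$, $r_1r_0e_1=r_0e_1$, $r_1e_0r_1e_0=e_0e_1e_0$, $r_1r_0r_1e_0=e_0r_1r_0r_1$, $e_1r_0e_1=\delta e_1$, $e_1e_0e_1=\delta e_1$, $e_1r_0r_1=e_1r_0$, $e_1e_0r_1=e_1e_0$. Write $\mathrm{Br}(\mathrm{C}_n)=\mathrm{Br}(\mathrm{C}_n,\mathbb{Z}[\delta^{\pm1}],\delta)$.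 $\mathrm{Br}(\mathrm{A}_{2n-1})$ denotes the classical Brauer algebra on $2n$ strands over $\mathbb{Z}[\delta^{\pm1}]$: it is free with basis the Brauer diagrams, i.e. perfect matchings of the $4n$ dots $(j,1),(j,0)$, $1\le j\le 2n$, with multiplication by concatenation where each closed loop formed is replaced by a factor $\delta$. $R_j$ ($1\le j\le 2n-1$) is the diagram joining $(j,1)$ to $(j+1,0)$, $(j+1,1)$ to $(j,0)$ and $(k,1)$ to $(k,0)$ for $k\ne j,j+1$; $E_j$ is the diagram joining $(j,1)$ to $(j+1,1)$, $(j,0)$ to $(j+1,0)$ and $(k,1)$ to $(k,0)$ for $k\neq j,j+1$. A Brauer diagram is symmetric if it is invariant under the reflection $(j,\epsilon)\mapsto(2n+1-j,\epsilon)$. $\mathrm{SBr}(\mathrm{A}_{2n-1})$ is the $\mathbb{Z}[\delta^{\pm1}]$-span of the symmetric diagrams (a subalgebra). It is a known fact (used freely) that $\phi$ is a well-defined algebra homomorphism. *)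

theory Defs
  imports "HOL-Computational_Algebra.Formal_Laurent_Series"
begin

text \<open>Z[delta^(+-1)] is realised as the Laurent polynomials inside the integer Laurent
series, with delta = fls_X.\<close>

definition laurent_poly :: "int fls \<Rightarrow> bool" where
  "laurent_poly f \<longleftrightarrow> finite {k. fls_nth f k \<noteq> 0}"

abbreviation delta :: "int fls" where "delta \<equiv> fls_X"

type_synonym dot = "nat \<times> nat"
type_synonym diagram = "dot \<Rightarrow> dot"

definition dots :: "nat \<Rightarrow> dot set" where
  "dots N = {1..N} \<times> {0, 1}"

text \<open>A perfect matching of the dots is encoded as a fixed-point-free involution of
the dots (each dot is sent to its partner), extended by the identity elsewhere.\<close>

definition brauer_diagram :: "nat \<Rightarrow> diagram \<Rightarrow> bool" where
  "brauer_diagram N d \<longleftrightarrow>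
     (\<forall>x\<in>dots N. d x \<in> dots N \<and> d x \<noteq> x \<and> d (d x) = x) \<and> (\<forall>x. x \<notin> dots N \<longrightarrow> d x = x)"

definition id_diag :: "nat \<Rightarrow> diagram" where
  "id_diag N = (\<lambda>(k, e). if (k, e) \<in> dots N then (k, 1 - e) else (k, e))"

definition R_diag :: "nat \<Rightarrow> nat \<Rightarrow> diagram" where
  "R_diag N j = (\<lambda>(k, e). if (k, e) \<notin> dots N then (k, e)
       else if k = j then (j + 1, 1 - e)
       else if k = j + 1 then (j, 1 - e)
       else (k, 1 - e))"

definition E_diag :: "nat \<Rightarrow> nat \<Rightarrow> diagram" where
  "E_diag N j = (\<lambda>(k, e). if (k, e) \<notin> dots N then (k, e)
       else if k = j then (j + 1, e)
       else if k = j + 1 then (j, e)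
       else (k, 1 - e))"

definition reflect :: "nat \<Rightarrow> dot \<Rightarrow> dot" where
  "reflect N = (\<lambda>(j, e). (N + 1 - j, e))"

definition symmetric_diag :: "nat \<Rightarrow> diagram \<Rightarrow> bool" where
  "symmetric_diag N d \<longleftrightarrow> (\<forall>x\<in>dots N. d (reflect N x) = reflect N (d x))"

text \<open>Vertices of the stacked picture: (0,j) top row of d1, (1,j) the identified
middle row (bottom of d1 = top of d2), (2,j) bottom row of d2.\<close>

definition top_map :: "dot \<Rightarrow> nat \<times> nat" where
  "top_map = (\<lambda>(j, e). if e = 1 then (0, j) else (1, j))"

definition bot_map :: "dot \<Rightarrow> nat \<times> nat" where
  "bot_map = (\<lambda>(j, e). if e = 1 then (1, j) else (2, j))"

definition out_map :: "dot \<Rightarrow> nat \<times> nat" where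
  "out_map = (\<lambda>(j, e). if e = 1 then (0, j) else (2, j))"

definition comp_edges :: "nat \<Rightarrow> diagram \<Rightarrow> diagram \<Rightarrow> ((nat \<times> nat) \<times> (nat \<times> nat)) set" where
  "comp_edges N d1 d2 =
     {(top_map x, top_map (d1 x)) | x. x \<in> dots N} \<union> {(bot_map x, bot_map (d2 x)) | x. x \<in> dots N}"

definition compose :: "nat \<Rightarrow> diagram \<Rightarrow> diagram \<Rightarrow> diagram" where
  "compose N d1 d2 = (\<lambda>x. if x \<in> dots N then
      (THE y. y \<in> dots N \<and> y \<noteq> x \<and> (out_map x, out_map y) \<in> (comp_edges N d1 d2)\<^sup>*)
      else x)"

definition loops :: "nat \<Rightarrow> diagram \<Rightarrow> diagram \<Rightarrow> nat" where
  "loops N d1 d2 = card {C. \<exists>j\<in>{1..N}. C = ((comp_edges N d1 d2)\<^sup>*) `` {(1, j)}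
                              \<and> C \<subseteq> {1} \<times> {1..N}}"

type_synonym br_elem = "diagram \<Rightarrow> int fls"

definition Br :: "nat \<Rightarrow> br_elem set" where
  "Br N = {a. (\<forall>d. a d \<noteq> 0 \<longrightarrow> brauer_diagram N d) \<and> (\<forall>d. laurent_poly (a d))}"

definition SBr :: "nat \<Rightarrow> br_elem set" where
  "SBr N = {a \<in> Br N. \<forall>d. a d \<noteq> 0 \<longrightarrow> symmetric_diag N d}"

definition basis_elem :: "diagram \<Rightarrow> br_elem" where
  "basis_elem d = (\<lambda>d'. if d' = d then 1 else 0)"

definition br_mult :: "nat \<Rightarrow> br_elem \<Rightarrow> br_elem \<Rightarrow> br_elem" where
  "br_mult N a b = (\<lambda>d. \<Sum>(d1, d2) \<in> {(d1, d2). brauer_diagram N d1 \<and> brauer_diagram N d2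
                                            \<and> compose N d1 d2 = d}.
                        a d1 * b d2 * delta ^ loops N d1 d2)"

inductive_set gen_subalg :: "nat \<Rightarrow> br_elem set \<Rightarrow> br_elem set" for N G where
  one: "basis_elem (id_diag N) \<in> gen_subalg N G"
| gen: "g \<in> G \<Longrightarrow> g \<in> gen_subalg N G"
| add: "x \<in> gen_subalg N G \<Longrightarrow> y \<in> gen_subalg N G \<Longrightarrow> (\<lambda>d. x d + y d) \<in> gen_subalg N G"
| smult: "laurent_poly c \<Longrightarrow> x \<in> gen_subalg N G \<Longrightarrow> (\<lambda>d. c * x d) \<in> gen_subalg N G"
| mult: "x \<in> gen_subalg N G \<Longrightarrow> y \<in> gen_subalg N G \<Longrightarrow> br_mult N x y \<in> gen_subalg N G"

definition phi_gens :: "nat \<Rightarrow> br_elem set" where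
  "phi_gens n =
     {basis_elem (R_diag (2 * n) n), basis_elem (E_diag (2 * n) n)}
     \<union> {br_mult (2 * n) (basis_elem (R_diag (2 * n) (n - i))) (basis_elem (R_diag (2 * n) (n + i))) | i. 0 < i \<and> i < n}
     \<union> {br_mult (2 * n) (basis_elem (E_diag (2 * n) (n - i))) (basis_elem (E_diag (2 * n) (n + i))) | i. 0 < i \<and> i < n}"

definition phi_image :: "nat \<Rightarrow> br_elem set" where
  "phi_image n = gen_subalg (2 * n) (phi_gens n)"

end

theory Submission
  imports Defs
begin

lemma laurent_poly_bound: "laurent_poly f \<longleftrightarrow> (\<exists>M. \<forall>k>M. fls_nth f k = 0)"
proof
  assume "laurent_poly f"
  hence fin: "finite {k. fls_nth f k \<noteq> 0}" by (simp add: laurent_poly_def)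
  show "\<exists>M. \<forall>k>M. fls_nth f k = 0"
  proof (cases "{k. fls_nth f k \<noteq> 0} = {}")
    case True thus ?thesis by auto
  next
    case False
    show ?thesis using Max_ge[OF fin] by (intro exI[of _ "Max {k. fls_nth f k \<noteq> 0}"]) force
  qed
next
  assume "\<exists>M. \<forall>k>M. fls_nth f k = 0"
  then obtain M where M: "\<forall>k>M. fls_nth f k = 0" by blast
  have "{k. fls_nth f k \<noteq> 0} \<subseteq> {fls_subdegree f..M}"
    using M fls_subdegree_leI[of f] by (auto simp: not_less)
  thus "laurent_poly f" unfolding laurent_poly_def by (rule finite_subset) simp
qed

lemma lp_mult: "laurent_poly f \<Longrightarrow> laurent_poly g \<Longrightarrow> laurent_poly (f * g)"
proof -
  assume "laurent_poly f" "laurent_poly g"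
  then obtain Mf Mg where F: "\<forall>k>Mf. fls_nth f k = 0" and G: "\<forall>k>Mg. fls_nth g k = 0"
    by (auto simp: laurent_poly_bound)
  have "\<forall>n>Mf+Mg. fls_nth (f*g) n = 0"
  proof (intro allI impI)
    fix n assume n: "n > Mf + Mg"
    show "fls_nth (f*g) n = 0" unfolding fls_times_nth(2)
      by (rule sum.neutral) (use F G n in \<open>force\<close>)
  qed
  thus ?thesis by (auto simp: laurent_poly_bound)
qed

lemma lp_add: "laurent_poly f \<Longrightarrow> laurent_poly g \<Longrightarrow> laurent_poly (f + g)"
  unfolding laurent_poly_def
  by (rule finite_subset[of _ "{k. fls_nth f k \<noteq> 0} \<union> {k. fls_nth g k \<noteq> 0}"]) auto

lemma lp_0[simp]: "laurent_poly 0" by (simp add: laurent_poly_def)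
lemma lp_1[simp]: "laurent_poly 1"
  unfolding laurent_poly_def by (rule finite_subset[of _ "{0}"]) auto

lemma lp_sum: "(\<And>x. x \<in> A \<Longrightarrow> laurent_poly (f x)) \<Longrightarrow> laurent_poly (\<Sum>x\<in>A. f x)"
  by (induction A rule: infinite_finite_induct) (auto intro: lp_add)

lemma lp_pow: "laurent_poly f \<Longrightarrow> laurent_poly (f ^ k)"
  by (induction k) (auto intro: lp_mult)

lemma lp_X[simp]: "laurent_poly fls_X"
  unfolding laurent_poly_def by (rule finite_subset[of _ "{1}"]) auto
lemma lp_Xinv[simp]: "laurent_poly fls_X_inv"
  unfolding laurent_poly_def by (rule finite_subset[of _ "{-1}"]) auto

lemma lp_neg: "laurent_poly f \<Longrightarrow> laurent_poly (- f)"
  unfolding laurent_poly_def by simp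

lemma Xinv_X_pow: "(fls_X_inv::int fls) ^ k * fls_X ^ k = 1"
  by (simp add: power_mult_distrib[symmetric] fls_X_inv_times_conv_shift fls_X_conv_shift_1)

definition V01 :: "nat \<Rightarrow> (nat \<times> nat) set" where "V01 N = {0,1} \<times> {1..N}"
definition V12 :: "nat \<Rightarrow> (nat \<times> nat) set" where "V12 N = {1,2} \<times> {1..N}"

lemma dots_iff: "(j,e) \<in> dots N \<longleftrightarrow> 1 \<le> j \<and> j \<le> N \<and> (e = 0 \<or> e = 1)"
  by (auto simp: dots_def)

lemma brauer_in: "brauer_diagram N d \<Longrightarrow> x \<in> dots N \<Longrightarrow> d x \<in> dots N"
  and brauer_ne: "brauer_diagram N d \<Longrightarrow> x \<in> dots N \<Longrightarrow> d x \<noteq> x"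
  and brauer_inv: "brauer_diagram N d \<Longrightarrow> x \<in> dots N \<Longrightarrow> d (d x) = x"
  and brauer_out: "brauer_diagram N d \<Longrightarrow> x \<notin> dots N \<Longrightarrow> d x = x"
  unfolding brauer_diagram_def by blast+

lemma brauer_inv_all: "brauer_diagram N d \<Longrightarrow> d (d x) = x"
  unfolding brauer_diagram_def by metis

lemma out_map_inj: "x \<in> dots N \<Longrightarrow> y \<in> dots N \<Longrightarrow> out_map x = out_map y \<Longrightarrow> x = y"
  by (cases x; cases y) (auto simp: out_map_def dots_def split: if_splits)

locale comp2 =
  fixes N :: nat and d1 d2 :: diagram
  assumes b1: "brauer_diagram N d1" and b2: "brauer_diagram N d2"
begin

abbreviation "E \<equiv> comp_edges N d1 d2"

definition nb1 :: "nat \<times> nat \<Rightarrow> nat \<times> nat" where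
  "nb1 v = top_map (d1 (snd v, if fst v = 0 then 1 else 0))"
definition nb2 :: "nat \<times> nat \<Rightarrow> nat \<times> nat" where
  "nb2 v = bot_map (d2 (snd v, if fst v = 1 then 1 else 0))"

lemma top_map_inv: "x \<in> dots N \<Longrightarrow> top_map x = v \<Longrightarrow> x = (snd v, if fst v = 0 then 1 else 0)"
  by (cases x) (auto simp: top_map_def dots_def split: if_splits)
lemma bot_map_inv: "x \<in> dots N \<Longrightarrow> bot_map x = v \<Longrightarrow> x = (snd v, if fst v = 1 then 1 else 0)"
  by (cases x) (auto simp: bot_map_def dots_def split: if_splits)

lemma top_map_V01: "x \<in> dots N \<Longrightarrow> top_map x \<in> V01 N"
  by (cases x) (auto simp: top_map_def dots_def V01_def)
lemma bot_map_V12: "x \<in> dots N \<Longrightarrow> bot_map x \<in> V12 N"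
  by (cases x) (auto simp: bot_map_def dots_def V12_def)

lemma V01_dot: "v \<in> V01 N \<Longrightarrow> (snd v, if fst v = 0 then 1 else 0) \<in> dots N \<and> top_map (snd v, if fst v = 0 then 1 else 0) = v"
  by (cases v) (auto simp: V01_def dots_def top_map_def)
lemma V12_dot: "v \<in> V12 N \<Longrightarrow> (snd v, if fst v = 1 then 1 else 0) \<in> dots N \<and> bot_map (snd v, if fst v = 1 then 1 else 0) = v"
  by (cases v) (auto simp: V12_def dots_def bot_map_def)

lemma nb1_V: "v \<in> V01 N \<Longrightarrow> nb1 v \<in> V01 N"
  unfolding nb1_def using V01_dot top_map_V01 brauer_in[OF b1] by blast
lemma nb2_V: "v \<in> V12 N \<Longrightarrow> nb2 v \<in> V12 N"
  unfolding nb2_def using V12_dot bot_map_V12 brauer_in[OF b2] by blast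

lemma nb1_inv: "v \<in> V01 N \<Longrightarrow> nb1 (nb1 v) = v"
proof -
  assume v: "v \<in> V01 N"
  define x where "x = (snd v, if fst v = 0 then 1 else 0::nat)"
  have x: "x \<in> dots N" "top_map x = v" using V01_dot[OF v] x_def by auto
  have "nb1 v = top_map (d1 x)" by (simp add: nb1_def x_def)
  moreover have "d1 x \<in> dots N" using brauer_in[OF b1 x(1)] .
  ultimately have "nb1 (nb1 v) = top_map (d1 (d1 x))"
    using top_map_inv[of "d1 x" "nb1 v"] by (simp add: nb1_def)
  thus ?thesis using brauer_inv[OF b1 x(1)] x(2) by simp
qed

lemma nb2_inv: "v \<in> V12 N \<Longrightarrow> nb2 (nb2 v) = v"
proof -
  assume v: "v \<in> V12 N"
  define x where "x = (snd v, if fst v = 1 then 1 else 0::nat)"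
  have x: "x \<in> dots N" "bot_map x = v" using V12_dot[OF v] x_def by auto
  have "nb2 v = bot_map (d2 x)" by (simp add: nb2_def x_def)
  moreover have "d2 x \<in> dots N" using brauer_in[OF b2 x(1)] .
  ultimately have "nb2 (nb2 v) = bot_map (d2 (d2 x))"
    using bot_map_inv[of "d2 x" "nb2 v"] by (simp add: nb2_def)
  thus ?thesis using brauer_inv[OF b2 x(1)] x(2) by simp
qed

lemma top_map_inj: "x \<in> dots N \<Longrightarrow> y \<in> dots N \<Longrightarrow> top_map x = top_map y \<Longrightarrow> x = y"
  using top_map_inv by metis
lemma bot_map_inj: "x \<in> dots N \<Longrightarrow> y \<in> dots N \<Longrightarrow> bot_map x = bot_map y \<Longrightarrow> x = y"
  using bot_map_inv by metis

lemma nb1_ne: "v \<in> V01 N \<Longrightarrow> nb1 v \<noteq> v"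
proof
  assume v: "v \<in> V01 N" and e: "nb1 v = v"
  define x where "x = (snd v, if fst v = 0 then 1 else 0::nat)"
  have x: "x \<in> dots N" "top_map x = v" using V01_dot[OF v] x_def by auto
  have "top_map (d1 x) = top_map x" using e x by (simp add: nb1_def x_def)
  hence "d1 x = x" using top_map_inj brauer_in[OF b1 x(1)] x(1) by blast
  thus False using brauer_ne[OF b1 x(1)] by simp
qed

lemma nb2_ne: "v \<in> V12 N \<Longrightarrow> nb2 v \<noteq> v"
proof
  assume v: "v \<in> V12 N" and e: "nb2 v = v"
  define x where "x = (snd v, if fst v = 1 then 1 else 0::nat)"
  have x: "x \<in> dots N" "bot_map x = v" using V12_dot[OF v] x_def by auto
  have "bot_map (d2 x) = bot_map x" using e x by (simp add: nb2_def x_def)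
  hence "d2 x = x" using bot_map_inj brauer_in[OF b2 x(1)] x(1) by blast
  thus False using brauer_ne[OF b2 x(1)] by simp
qed

lemma E_iff: "(a, b) \<in> E \<longleftrightarrow> (a \<in> V01 N \<and> b = nb1 a) \<or> (a \<in> V12 N \<and> b = nb2 a)"
proof
  assume "(a, b) \<in> E"
  then obtain x where "x \<in> dots N" "(a = top_map x \<and> b = top_map (d1 x)) \<or> (a = bot_map x \<and> b = bot_map (d2 x))"
    unfolding comp_edges_def by blast
  thus "(a \<in> V01 N \<and> b = nb1 a) \<or> (a \<in> V12 N \<and> b = nb2 a)"
    using top_map_V01 bot_map_V12 top_map_inv bot_map_inv unfolding nb1_def nb2_def by metis
next
  assume "(a \<in> V01 N \<and> b = nb1 a) \<or> (a \<in> V12 N \<and> b = nb2 a)"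
  thus "(a, b) \<in> E"
  proof
    assume h: "a \<in> V01 N \<and> b = nb1 a"
    define x where "x = (snd a, if fst a = 0 then 1 else 0::nat)"
    have "x \<in> dots N" "top_map x = a" using V01_dot h x_def by auto
    moreover have "b = top_map (d1 x)" using h by (simp add: nb1_def x_def)
    ultimately show ?thesis unfolding comp_edges_def by blast
  next
    assume h: "a \<in> V12 N \<and> b = nb2 a"
    define x where "x = (snd a, if fst a = 1 then 1 else 0::nat)"
    have "x \<in> dots N" "bot_map x = a" using V12_dot h x_def by auto
    moreover have "b = bot_map (d2 x)" using h by (simp add: nb2_def x_def)
    ultimately show ?thesis unfolding comp_edges_def by blast
  qed
qed

lemma V01_V12: "v \<in> V01 N \<Longrightarrow> v \<in> V12 N \<Longrightarrow> fst v = 1"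
  by (auto simp: V01_def V12_def)
lemma mid_V: "fst v = 1 \<Longrightarrow> v \<in> V01 N \<or> v \<in> V12 N \<Longrightarrow> v \<in> V01 N \<and> v \<in> V12 N"
  by (auto simp: V01_def V12_def)

fun step :: "(nat \<times> nat) \<times> bool \<Rightarrow> (nat \<times> nat) \<times> bool" where
  "step (v, True) = (nb1 v, False)"
| "step (v, False) = (nb2 v, True)"

definition valid :: "(nat \<times> nat) \<times> bool \<Rightarrow> bool" where
  "valid s \<longleftrightarrow> (if snd s then fst s \<in> V01 N else fst s \<in> V12 N)"

lemma step_V: "valid s \<Longrightarrow> (snd (step s) \<longrightarrow> fst (step s) \<in> V12 N) \<and> (\<not> snd (step s) \<longrightarrow> fst (step s) \<in> V01 N)"
  by (cases s; cases "snd s") (auto simp: valid_def nb1_V nb2_V)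

lemma step_valid: "valid s \<Longrightarrow> fst (fst (step s)) = 1 \<Longrightarrow> valid (step s)"
  using step_V[of s] mid_V[of "fst (step s)"] unfolding valid_def by (auto split: if_splits)

lemma step_inj: assumes "valid s" "valid s'" "step s = step s'" shows "s = s'"
proof -
  obtain v b where s: "s = (v, b)" by fastforce
  obtain v' b' where s': "s' = (v', b')" by fastforce
  show ?thesis
  proof (cases b)
    case True
    then have b': b' using assms(3) s s' by (cases b') auto
    have "nb1 v = nb1 v'" using assms(3) s s' True b' by simp
    hence "nb1 (nb1 v) = nb1 (nb1 v')" by simp
    thus ?thesis using nb1_inv assms(1,2) s s' True b' by (simp add: valid_def)
  next
    case False
    then have b': "\<not> b'" using assms(3) s s' by (cases b') auto
    have "nb2 v = nb2 v'" using assms(3) s s' False b' by simp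
    hence "nb2 (nb2 v) = nb2 (nb2 v')" by simp
    thus ?thesis using nb2_inv assms(1,2) s s' False b' by (simp add: valid_def)
  qed
qed

definition fl :: "(nat \<times> nat) \<times> bool \<Rightarrow> (nat \<times> nat) \<times> bool" where
  "fl s = (fst s, \<not> snd s)"

lemma step_fl_step: "valid s \<Longrightarrow> step (fl (step s)) = fl s"
  by (cases s; cases "snd s") (auto simp: valid_def fl_def nb1_inv nb2_inv)

lemma step_ne_fl: "valid s \<Longrightarrow> step s \<noteq> fl s"
  by (cases s; cases "snd s") (auto simp: valid_def fl_def nb1_ne nb2_ne)

definition st :: "dot \<Rightarrow> (nat \<times> nat) \<times> bool" where
  "st x = (out_map x, snd x = 1)"

definition walk :: "dot \<Rightarrow> nat \<Rightarrow> (nat \<times> nat) \<times> bool" where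
  "walk x i = (step ^^ i) (st x)"

lemma walk_0: "walk x 0 = st x" by (simp add: walk_def)
lemma walk_Suc: "walk x (Suc i) = step (walk x i)" by (simp add: walk_def)

lemma st_valid: "x \<in> dots N \<Longrightarrow> valid (st x)"
  by (cases x) (auto simp: st_def valid_def out_map_def dots_def V01_def V12_def)

lemma st_row: "x \<in> dots N \<Longrightarrow> fst (fst (st x)) \<noteq> 1"
  by (cases x) (auto simp: st_def out_map_def dots_def)

abbreviation "mid x i \<equiv> fst (fst (walk x i)) = 1"

lemma walk_valid: "x \<in> dots N \<Longrightarrow> i = 0 \<or> mid x i \<Longrightarrow> (\<And>i'. 0 < i' \<Longrightarrow> i' < i \<Longrightarrow> mid x i') \<Longrightarrow> valid (walk x i)"
proof (induction i)
  case 0 thus ?case by (simp add: walk_0 st_valid)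
next
  case (Suc i)
  have "valid (walk x i)" using Suc by auto
  thus ?case using Suc.prems(2) step_valid by (simp add: walk_Suc)
qed

lemma walk_inj: "x \<in> dots N \<Longrightarrow> (\<And>i'. 0 < i' \<Longrightarrow> i' < j \<Longrightarrow> mid x i') \<Longrightarrow> i < j \<Longrightarrow> walk x i \<noteq> walk x j"
proof (induction i arbitrary: j)
  case 0
  then obtain j' where j: "j = Suc j'" by (cases j) auto
  have v: "valid (walk x j')" using 0 j by (intro walk_valid) auto
  have "walk x j = step (walk x j')" using j walk_Suc by simp
  moreover have "\<not> (step (walk x j') = st x)"
  proof
    assume e: "step (walk x j') = st x"
    have "snd (step (walk x j')) \<longrightarrow> fst (step (walk x j')) \<in> V12 N"
        "\<not> snd (step (walk x j')) \<longrightarrow> fst (step (walk x j')) \<in> V01 N" using step_V[OF v] by auto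
    thus False using e 0(1) by (cases x) (auto simp: st_def out_map_def V12_def V01_def dots_def)
  qed
  ultimately show ?case by (simp add: walk_0)
next
  case (Suc i)
  then obtain j' where j: "j = Suc j'" by (cases j) auto
  have "i = 0 \<or> mid x i" using Suc.prems j by (cases "i = 0") (auto intro!: Suc.prems(2))
  hence v1: "valid (walk x i)" using Suc.prems j by (intro walk_valid) auto
  have v2: "valid (walk x j')" using Suc.prems j by (intro walk_valid) auto
  have "walk x i \<noteq> walk x j'" using Suc.prems j by (intro Suc.IH) auto
  thus ?case using step_inj[OF v1 v2] j by (auto simp: walk_Suc)
qed

definition Sts where "Sts = (V01 N \<times> {True}) \<union> (V12 N \<times> {False})"

lemma finite_Sts: "finite Sts"
  by (auto simp: Sts_def V01_def V12_def)

lemma valid_Sts: "valid s \<Longrightarrow> s \<in> Sts"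
  by (cases s) (auto simp: valid_def Sts_def split: if_splits)

lemma walk_term: "x \<in> dots N \<Longrightarrow> \<exists>k>0. \<not> mid x k"
proof (rule ccontr)
  assume x: "x \<in> dots N" and "\<not> (\<exists>k>0. \<not> mid x k)"
  hence allm: "\<And>k. 0 < k \<Longrightarrow> mid x k" by blast
  define M where "M = card Sts"
  have "inj_on (walk x) {0..M}"
  proof (rule inj_onI)
    fix i j assume "i \<in> {0..M}" "j \<in> {0..M}" and e: "walk x i = walk x j"
    show "i = j"
    proof (rule ccontr)
      assume "i \<noteq> j"
      hence "i < j \<or> j < i" by arith
      thus False
      proof
        assume "i < j" thus False using walk_inj[OF x, of j i] allm e by blast
      next
        assume "j < i" thus False using walk_inj[OF x, of i j] allm e by metis
      qed
    qed
  qed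
  moreover have "walk x ` {0..M} \<subseteq> Sts"
  proof (rule image_subsetI)
    fix i show "walk x i \<in> Sts"
      by (rule valid_Sts, rule walk_valid[OF x]) (use allm in auto)
  qed
  ultimately have "card {0..M} \<le> card Sts"
    using card_inj_on_le finite_Sts by blast
  thus False by (simp add: M_def)
qed

definition kk :: "dot \<Rightarrow> nat" where "kk x = (LEAST k. 0 < k \<and> \<not> mid x k)"

lemma kk: "x \<in> dots N \<Longrightarrow> 0 < kk x \<and> \<not> mid x (kk x)"
  unfolding kk_def by (rule LeastI_ex) (rule walk_term)
lemma kk_mid: "0 < i \<Longrightarrow> i < kk x \<Longrightarrow> mid x i"
  unfolding kk_def using not_less_Least by blast

lemma walk_valid_k: "x \<in> dots N \<Longrightarrow> i < kk x \<Longrightarrow> valid (walk x i)"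
  using walk_valid kk_mid by (metis less_trans not_gr0)

lemma walk_edge: "x \<in> dots N \<Longrightarrow> i < kk x \<Longrightarrow> (fst (walk x i), fst (walk x (Suc i))) \<in> E"
proof -
  assume "x \<in> dots N" "i < kk x"
  hence v: "valid (walk x i)" by (rule walk_valid_k)
  show ?thesis using v unfolding E_iff walk_Suc
    by (cases "walk x i"; cases "snd (walk x i)") (auto simp: valid_def)
qed

lemma walk_path: "x \<in> dots N \<Longrightarrow> i \<le> kk x \<Longrightarrow> (out_map x, fst (walk x i)) \<in> E\<^sup>*"
proof (induction i)
  case 0 thus ?case by (simp add: walk_0 st_def)
next
  case (Suc i)
  thus ?case using walk_edge[of x i] by (auto intro: rtrancl_into_rtrancl)
qed

lemma walk_end_V: "x \<in> dots N \<Longrightarrow> fst (walk x (kk x)) \<in> V01 N \<union> V12 N"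
proof -
  assume x: "x \<in> dots N"
  obtain k' where k: "kk x = Suc k'" using kk[OF x] by (cases "kk x") auto
  have "valid (walk x k')" using walk_valid_k[OF x] k by simp
  thus ?thesis using step_V[of "walk x k'"] k walk_Suc by (cases "snd (step (walk x k'))") auto
qed

lemma walk_pal: "x \<in> dots N \<Longrightarrow> fst (walk x (kk x)) = out_map x \<Longrightarrow> t \<le> kk x \<Longrightarrow> walk x t = fl (walk x (kk x - t))"
proof (induction t)
  case 0
  obtain k' where k: "kk x = Suc k'" using kk[OF 0(1)] by (cases "kk x") auto
  have v: "valid (walk x k')" using walk_valid_k[OF 0(1)] k by simp
  have sv: "(snd (step (walk x k')) \<longrightarrow> fst (step (walk x k')) \<in> V12 N) \<and> (\<not> snd (step (walk x k')) \<longrightarrow> fst (step (walk x k')) \<in> V01 N)"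
    by (rule step_V[OF v])
  have "fst (step (walk x k')) = out_map x" using 0(2) k walk_Suc by simp
  with sv 0(1) have "snd (step (walk x k')) = (\<not> snd (st x))"
    by (cases x) (auto simp: st_def out_map_def V01_def V12_def dots_def split: if_splits)
  thus ?case using 0(2) k by (simp add: walk_0 walk_Suc fl_def st_def prod_eq_iff)
next
  case (Suc t)
  have IH: "walk x t = fl (walk x (kk x - t))" using Suc by auto
  have e: "kk x - t = Suc (kk x - Suc t)" using Suc by simp
  have v: "valid (walk x (kk x - Suc t))" using walk_valid_k[OF Suc(2)] Suc(4) kk[OF Suc(2)] by auto
  have "walk x (Suc t) = step (fl (step (walk x (kk x - Suc t))))"
    using IH e by (simp add: walk_Suc)
  thus ?case using step_fl_step[OF v] by simp
qed

lemma fl_ne: "fl s \<noteq> s" by (cases s) (auto simp: fl_def)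

lemma walk_end_ne: "x \<in> dots N \<Longrightarrow> fst (walk x (kk x)) \<noteq> out_map x"
proof
  assume x: "x \<in> dots N" and e: "fst (walk x (kk x)) = out_map x"
  show False
  proof (cases "even (kk x)")
    case True
    then obtain t where t: "kk x = 2 * t" by blast
    have "walk x t = fl (walk x t)" using walk_pal[OF x e, of t] t by simp
    thus False using fl_ne by metis
  next
    case False
    then obtain t where t: "kk x = 2 * t + 1" using oddE by blast
    have "walk x (Suc t) = fl (walk x t)" using walk_pal[OF x e, of "Suc t"] t by simp
    moreover have "valid (walk x t)" using walk_valid_k[OF x] t by simp
    ultimately show False using step_ne_fl walk_Suc by metis
  qed
qed

definition W where "W x = {fst (walk x i) | i. i \<le> kk x}"

lemma W_closed: "x \<in> dots N \<Longrightarrow> a \<in> W x \<Longrightarrow> (a, b) \<in> E \<Longrightarrow> b \<in> W x"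
proof -
  assume x: "x \<in> dots N" and aW: "a \<in> W x" and ab: "(a, b) \<in> E"
  then obtain i where i: "i \<le> kk x" "a = fst (walk x i)" unfolding W_def by blast
  have k: "0 < kk x" "\<not> mid x (kk x)" using kk[OF x] by auto
  have Wi: "\<And>i. i \<le> kk x \<Longrightarrow> fst (walk x i) \<in> W x" unfolding W_def by blast
  consider "i = 0" | "0 < i \<and> i < kk x" | "i = kk x" using i by linarith
  thus "b \<in> W x"
  proof cases
    case 1
    have "walk x 0 = st x" by (simp add: walk_0)
    have ab': "(a \<in> V01 N \<and> b = nb1 a) \<or> (a \<in> V12 N \<and> b = nb2 a)" using ab E_iff by blast
    obtain j e where xe: "x = (j, e)" by (cases x) auto
    have ai: "a = out_map x" using i 1 by (simp add: walk_0 st_def)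
    have "b = fst (walk x 1)"
    proof (cases "e = 1")
      case True
      have "a = (0, j)" using ai xe True by (simp add: out_map_def)
      hence "a \<notin> V12 N" by (simp add: V12_def)
      hence "b = nb1 a" using ab' by blast
      moreover have "walk x 1 = (nb1 a, False)" using ai xe True by (simp add: walk_Suc walk_0 st_def)
      ultimately show ?thesis by simp
    next
      case False
      have "a = (2, j)" using ai xe False by (simp add: out_map_def)
      hence "a \<notin> V01 N" by (simp add: V01_def)
      hence "b = nb2 a" using ab' by blast
      moreover have "walk x 1 = (nb2 a, True)" using ai xe False by (simp add: walk_Suc walk_0 st_def)
      ultimately show ?thesis by simp
    qed
    thus ?thesis using Wi k by (metis One_nat_def Suc_leI)
  next
    case 2
    obtain i' where i': "i = Suc i'" using 2 by (cases i) auto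
    have vi: "valid (walk x i)" using walk_valid_k[OF x] 2 by simp
    have vi': "valid (walk x i')" using walk_valid_k[OF x] 2 i' by simp
    have nx: "fst (walk x (Suc i)) = (if snd (walk x i) then nb1 a else nb2 a)"
      using i by (cases "walk x i"; cases "snd (walk x i)") (auto simp: walk_Suc)
    have pv: "fst (walk x i') = (if snd (walk x i) then nb2 a else nb1 a)"
      using i i' vi' by (cases "walk x i'"; cases "snd (walk x i')")
         (auto simp: walk_Suc valid_def nb1_inv nb2_inv)
    have "b = nb1 a \<or> b = nb2 a" using ab E_iff by blast
    hence "b = fst (walk x (Suc i)) \<or> b = fst (walk x i')" using nx pv by (auto split: if_splits)
    thus ?thesis using Wi[of "Suc i"] Wi[of i'] 2 i' by auto
  next
    case 3
    obtain k' where k': "kk x = Suc k'" using k by (cases "kk x") auto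
    have v: "valid (walk x k')" using walk_valid_k[OF x] k' by simp
    have ab': "(a \<in> V01 N \<and> b = nb1 a) \<or> (a \<in> V12 N \<and> b = nb2 a)" using ab E_iff by blast
    obtain w \<beta> where wk: "walk x k' = (w, \<beta>)" by (cases "walk x k'") auto
    have ai: "a = fst (walk x (kk x))" using i 3 by simp
    have "b = w"
    proof (cases \<beta>)
      case True
      hence w: "w \<in> V01 N" using v wk by (simp add: valid_def)
      have aw: "a = nb1 w" using ai k' wk True by (simp add: walk_Suc)
      have "a \<in> V01 N" using nb1_V[OF w] aw by simp
      moreover have "fst a \<noteq> 1" using k(2) ai by simp
      ultimately have "a \<notin> V12 N" by (auto simp: V01_def V12_def)
      thus ?thesis using ab' aw nb1_inv[OF w] by auto
    next
      case False
      hence w: "w \<in> V12 N" using v wk by (simp add: valid_def)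
      have aw: "a = nb2 w" using ai k' wk False by (simp add: walk_Suc)
      have "a \<in> V12 N" using nb2_V[OF w] aw by simp
      moreover have "fst a \<noteq> 1" using k(2) ai by simp
      ultimately have "a \<notin> V01 N" by (auto simp: V01_def V12_def)
      thus ?thesis using ab' aw nb2_inv[OF w] by auto
    qed
    hence "b = fst (walk x k')" using wk by simp
    thus ?thesis using Wi k' by simp
  qed
qed

lemma reach_W: "x \<in> dots N \<Longrightarrow> (out_map x, b) \<in> E\<^sup>* \<Longrightarrow> b \<in> W x"
proof -
  assume x: "x \<in> dots N" and r: "(out_map x, b) \<in> E\<^sup>*"
  have "out_map x \<in> W x" unfolding W_def by (rule CollectI, rule exI[of _ 0]) (simp add: walk_0 st_def)
  with r show ?thesis
  proof (induction rule: rtrancl_induct)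
    case base thus ?case by simp
  next
    case (step y z) thus ?case using W_closed[OF x, of y z] by simp
  qed
qed

definition endp :: "dot \<Rightarrow> dot" where
  "endp x = (let v = fst (walk x (kk x)) in (snd v, if fst v = 0 then 1 else 0))"

lemma endp: "x \<in> dots N \<Longrightarrow> endp x \<in> dots N \<and> out_map (endp x) = fst (walk x (kk x))"
proof -
  assume x: "x \<in> dots N"
  have "fst (walk x (kk x)) \<in> V01 N \<union> V12 N" by (rule walk_end_V[OF x])
  moreover have "fst (fst (walk x (kk x))) \<noteq> 1" using kk[OF x] by simp
  moreover obtain r c where rc: "fst (walk x (kk x)) = (r, c)" by (cases "fst (walk x (kk x))") auto
  ultimately have r: "r = 0 \<or> r = 2" and c: "1 \<le> c \<and> c \<le> N"
    by (auto simp: V01_def V12_def)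
  have "endp x = (c, if r = 0 then 1 else 0)" unfolding endp_def Let_def rc by simp
  thus ?thesis using r c rc by (auto simp: dots_def out_map_def)
qed

lemma uniq: assumes x: "x \<in> dots N" shows "\<exists>!y. y \<in> dots N \<and> y \<noteq> x \<and> (out_map x, out_map y) \<in> E\<^sup>*"
proof (rule ex1I)
  show "endp x \<in> dots N \<and> endp x \<noteq> x \<and> (out_map x, out_map (endp x)) \<in> E\<^sup>*"
    using endp[OF x] walk_end_ne[OF x] walk_path[OF x, of "kk x"] by auto
  fix y assume y: "y \<in> dots N \<and> y \<noteq> x \<and> (out_map x, out_map y) \<in> E\<^sup>*"
  then obtain i where i: "i \<le> kk x" "out_map y = fst (walk x i)" using reach_W[OF x] unfolding W_def by blast
  have ny: "fst (out_map y) \<noteq> 1" by (cases y) (auto simp: out_map_def)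
  have "i = 0 \<or> i = kk x"
  proof (rule ccontr)
    assume "\<not> (i = 0 \<or> i = kk x)"
    hence "0 < i" "i < kk x" using i(1) by auto
    hence "mid x i" by (rule kk_mid)
    thus False using i(2) ny by simp
  qed
  moreover have "i \<noteq> 0"
  proof
    assume "i = 0"
    hence "out_map y = out_map x" using i by (simp add: walk_0 st_def)
    thus False using out_map_inj[of y N x] x y by auto
  qed
  ultimately have "out_map y = out_map (endp x)" using i endp[OF x] by auto
  thus "y = endp x" using out_map_inj[of y N "endp x"] y endp[OF x] by simp
qed

lemma compose_eq: "x \<in> dots N \<Longrightarrow> y \<in> dots N \<Longrightarrow> y \<noteq> x \<Longrightarrow> (out_map x, out_map y) \<in> E\<^sup>* \<Longrightarrow> compose N d1 d2 x = y"
  unfolding compose_def using uniq by (simp add: the1_equality)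

lemma compose_prop: "x \<in> dots N \<Longrightarrow> compose N d1 d2 x \<in> dots N \<and> compose N d1 d2 x \<noteq> x \<and> (out_map x, out_map (compose N d1 d2 x)) \<in> E\<^sup>*"
  using uniq compose_eq by metis

lemma E_sym: "(a, b) \<in> E \<Longrightarrow> (b, a) \<in> E"
  unfolding E_iff using nb1_V nb2_V nb1_inv nb2_inv by metis

lemma Estar_sym: "(a, b) \<in> E\<^sup>* \<Longrightarrow> (b, a) \<in> E\<^sup>*"
  by (induction rule: rtrancl_induct) (auto intro: converse_rtrancl_into_rtrancl E_sym)

lemma compose_brauer: "brauer_diagram N (compose N d1 d2)"
  unfolding brauer_diagram_def
proof (intro conjI ballI allI impI)
  fix x assume x: "x \<in> dots N"
  show "compose N d1 d2 x \<in> dots N" "compose N d1 d2 x \<noteq> x" using compose_prop[OF x] by auto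
  show "compose N d1 d2 (compose N d1 d2 x) = x"
    using compose_prop[OF x] x by (intro compose_eq) (auto intro: Estar_sym)
next
  fix x assume "x \<notin> dots N" thus "compose N d1 d2 x = x" by (simp add: compose_def)
qed

end

lemma finite_brauer: "finite {d. brauer_diagram N d}"
proof -
  let ?A = "dots N"
  define F where "F = (\<lambda>f::diagram. \<lambda>x. if x \<in> ?A then f x else undefined)"
  have fA: "finite ?A" by (simp add: dots_def)
  have "F ` {d. brauer_diagram N d} \<subseteq> {f. \<forall>x. (x \<in> ?A \<longrightarrow> f x \<in> ?A) \<and> (x \<notin> ?A \<longrightarrow> f x = undefined)}"
    by (auto simp: F_def brauer_diagram_def)
  hence fin: "finite (F ` {d. brauer_diagram N d})"
    using finite_set_of_finite_funs[OF fA fA] finite_subset by blast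
  have "inj_on F {d. brauer_diagram N d}"
  proof (rule inj_onI)
    fix f g assume f: "f \<in> {d. brauer_diagram N d}" and g: "g \<in> {d. brauer_diagram N d}" and e: "F f = F g"
    show "f = g"
    proof
      fix x show "f x = g x"
      proof (cases "x \<in> ?A")
        case True thus ?thesis using fun_cong[OF e, of x] by (simp add: F_def)
      next
        case False thus ?thesis using f g by (simp add: brauer_out)
      qed
    qed
  qed
  thus ?thesis using fin finite_imageD by blast
qed

lemma br_mult_basis:
  assumes a: "brauer_diagram N a" and b: "brauer_diagram N b"
  shows "br_mult N (basis_elem a) (basis_elem b) = (\<lambda>d. if d = compose N a b then delta ^ loops N a b else 0)"
proof
  fix d
  let ?S = "{(d1, d2). brauer_diagram N d1 \<and> brauer_diagram N d2 \<and> compose N d1 d2 = d}"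
  have fin: "finite ?S"
    by (rule finite_subset[of _ "{d. brauer_diagram N d} \<times> {d. brauer_diagram N d}"])
       (auto simp: finite_brauer)
  have "br_mult N (basis_elem a) (basis_elem b) d =
      (\<Sum>p\<in>?S. if p = (a, b) then delta ^ loops N a b else 0)"
    unfolding br_mult_def
    by (rule sum.cong) (auto simp: basis_elem_def split: if_splits)
  also have "\<dots> = (if (a, b) \<in> ?S then delta ^ loops N a b else 0)"
    using sum.delta[OF fin, of "(a,b)" "\<lambda>_. delta ^ loops N a b"] by simp
  finally show "br_mult N (basis_elem a) (basis_elem b) d = (if d = compose N a b then delta ^ loops N a b else 0)"
    using a b by auto
qed

definition reflv :: "nat \<Rightarrow> nat \<times> nat \<Rightarrow> nat \<times> nat" where
  "reflv N = (\<lambda>(r, j). (r, N + 1 - j))"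

lemma reflect_dots: "x \<in> dots N \<Longrightarrow> reflect N x \<in> dots N"
  by (cases x) (auto simp: reflect_def dots_def)
lemma reflect_reflect: "x \<in> dots N \<Longrightarrow> reflect N (reflect N x) = x"
  by (cases x) (auto simp: reflect_def dots_def)

lemma refl_edges:
  assumes s1: "symmetric_diag N d1" and s2: "symmetric_diag N d2"
    and e: "(a, b) \<in> comp_edges N d1 d2"
  shows "(reflv N a, reflv N b) \<in> comp_edges N d1 d2"
proof -
  from e obtain x where x: "x \<in> dots N" "(a = top_map x \<and> b = top_map (d1 x)) \<or> (a = bot_map x \<and> b = bot_map (d2 x))"
    unfolding comp_edges_def by blast
  have tm: "\<And>z. reflv N (top_map z) = top_map (reflect N z)"
    by (auto simp: reflv_def top_map_def reflect_def split: prod.splits)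
  have bm: "\<And>z. reflv N (bot_map z) = bot_map (reflect N z)"
    by (auto simp: reflv_def bot_map_def reflect_def split: prod.splits)
  have rx: "reflect N x \<in> dots N" using reflect_dots x by blast
  have "d1 (reflect N x) = reflect N (d1 x)" "d2 (reflect N x) = reflect N (d2 x)"
    using s1 s2 x unfolding symmetric_diag_def by auto
  thus ?thesis using x rx tm bm unfolding comp_edges_def by fastforce
qed

lemma refl_path:
  assumes s1: "symmetric_diag N d1" and s2: "symmetric_diag N d2"
  shows "(a, b) \<in> (comp_edges N d1 d2)\<^sup>* \<Longrightarrow> (reflv N a, reflv N b) \<in> (comp_edges N d1 d2)\<^sup>*"
  by (induction rule: rtrancl_induct) (auto intro: rtrancl_into_rtrancl refl_edges[OF s1 s2])

lemma compose_symmetric: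
  assumes b1: "brauer_diagram N d1" and b2: "brauer_diagram N d2"
    and s1: "symmetric_diag N d1" and s2: "symmetric_diag N d2"
  shows "symmetric_diag N (compose N d1 d2)"
  unfolding symmetric_diag_def
proof
  interpret comp2 N d1 d2 using b1 b2 by unfold_locales
  fix x assume x: "x \<in> dots N"
  have rx: "reflect N x \<in> dots N" by (rule reflect_dots[OF x])
  have P: "compose N d1 d2 x \<in> dots N" "compose N d1 d2 x \<noteq> x" "(out_map x, out_map (compose N d1 d2 x)) \<in> E\<^sup>*"
    using compose_prop[OF x] by auto
  have om: "\<And>z. reflv N (out_map z) = out_map (reflect N z)"
    by (auto simp: reflv_def out_map_def reflect_def split: prod.splits)
  show "compose N d1 d2 (reflect N x) = reflect N (compose N d1 d2 x)"
  proof (rule compose_eq[OF rx])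
    show "reflect N (compose N d1 d2 x) \<in> dots N" using reflect_dots P by blast
    show "reflect N (compose N d1 d2 x) \<noteq> reflect N x" using P reflect_reflect x by metis
    show "(out_map (reflect N x), out_map (reflect N (compose N d1 d2 x))) \<in> E\<^sup>*"
      using refl_path[OF s1 s2 P(3)] om by simp
  qed
qed

definition fd :: "dot \<Rightarrow> dot" where "fd = (\<lambda>(j, e). (j, 1 - e))"

definition flipd :: "nat \<Rightarrow> diagram \<Rightarrow> diagram" where
  "flipd N d = (\<lambda>x. if x \<in> dots N then fd (d (fd x)) else x)"

lemma fd_dots: "x \<in> dots N \<Longrightarrow> fd x \<in> dots N"
  by (cases x) (auto simp: fd_def dots_def)
lemma fd_fd: "x \<in> dots N \<Longrightarrow> fd (fd x) = x"
  by (cases x) (auto simp: fd_def dots_def)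

lemma flipd_brauer: "brauer_diagram N d \<Longrightarrow> brauer_diagram N (flipd N d)"
  unfolding brauer_diagram_def flipd_def
  by (auto simp: fd_dots fd_fd) (metis fd_dots fd_fd)+

lemma flipd_flipd: assumes b: "brauer_diagram N d" shows "flipd N (flipd N d) = d"
proof
  fix x
  show "flipd N (flipd N d) x = d x"
  proof (cases "x \<in> dots N")
    case True
    have "d x \<in> dots N" using brauer_in[OF b True] .
    thus ?thesis using True by (simp add: flipd_def fd_dots fd_fd)
  next
    case False thus ?thesis using brauer_out[OF b False] by (simp add: flipd_def)
  qed
qed

lemma fd_reflect: "fd (reflect N x) = reflect N (fd x)"
  by (cases x) (simp add: fd_def reflect_def)

lemma flipd_sym: assumes b: "brauer_diagram N d" and s: "symmetric_diag N d"
  shows "symmetric_diag N (flipd N d)"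
  unfolding symmetric_diag_def
proof
  fix x assume x: "x \<in> dots N"
  have "flipd N d (reflect N x) = fd (d (fd (reflect N x)))" using reflect_dots[OF x] by (simp add: flipd_def)
  also have "\<dots> = fd (d (reflect N (fd x)))" by (simp add: fd_reflect)
  also have "\<dots> = fd (reflect N (d (fd x)))" using s fd_dots[OF x] by (simp add: symmetric_diag_def)
  also have "\<dots> = reflect N (fd (d (fd x)))" by (simp add: fd_reflect)
  also have "\<dots> = reflect N (flipd N d x)" using x by (simp add: flipd_def)
  finally show "flipd N d (reflect N x) = reflect N (flipd N d x)" .
qed

definition rs :: "nat \<times> nat \<Rightarrow> nat \<times> nat" where "rs = (\<lambda>(r, j). (2 - r, j))"

lemma flip_edges:
  assumes b1: "brauer_diagram N d1" and b2: "brauer_diagram N d2"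
  assumes e: "(a, b) \<in> comp_edges N d1 d2"
  shows "(rs a, rs b) \<in> comp_edges N (flipd N d2) (flipd N d1)"
proof -
  have tb: "\<And>z. z \<in> dots N \<Longrightarrow> rs (bot_map z) = top_map (fd z)"
    by (auto simp: rs_def bot_map_def top_map_def fd_def dots_def)
  have bt: "\<And>z. z \<in> dots N \<Longrightarrow> rs (top_map z) = bot_map (fd z)"
    by (auto simp: rs_def bot_map_def top_map_def fd_def dots_def)
  from e obtain x where x: "x \<in> dots N" "(a = top_map x \<and> b = top_map (d1 x)) \<or> (a = bot_map x \<and> b = bot_map (d2 x))"
    unfolding comp_edges_def by blast
  show ?thesis
  proof (cases "a = top_map x \<and> b = top_map (d1 x)")
    case True
    have eq: "flipd N d1 (fd x) = fd (d1 x)" using x by (simp add: flipd_def fd_dots fd_fd)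
    have "rs a = bot_map (fd x)" "rs b = bot_map (flipd N d1 (fd x))"
      using True x tb bt eq brauer_in[OF b1 x(1)] by auto
    thus ?thesis unfolding comp_edges_def using fd_dots[OF x(1)] by blast
  next
    case False
    hence F: "a = bot_map x \<and> b = bot_map (d2 x)" using x by blast
    have eq: "flipd N d2 (fd x) = fd (d2 x)" using x by (simp add: flipd_def fd_dots fd_fd)
    have "rs a = top_map (fd x)" "rs b = top_map (flipd N d2 (fd x))"
      using F x tb bt eq brauer_in[OF b2 x(1)] by auto
    thus ?thesis unfolding comp_edges_def using fd_dots[OF x(1)] by blast
  qed
qed

lemma flip_path:
  assumes b1: "brauer_diagram N d1" and b2: "brauer_diagram N d2"
  shows "(a, b) \<in> (comp_edges N d1 d2)\<^sup>* \<Longrightarrow> (rs a, rs b) \<in> (comp_edges N (flipd N d2) (flipd N d1))\<^sup>*"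
  by (induction rule: rtrancl_induct) (auto intro: rtrancl_into_rtrancl flip_edges[OF b1 b2])

lemma compose_flip:
  assumes b1: "brauer_diagram N d1" and b2: "brauer_diagram N d2"
  shows "compose N (flipd N d2) (flipd N d1) = flipd N (compose N d1 d2)"
proof
  interpret c: comp2 N d1 d2 using b1 b2 by unfold_locales
  interpret c': comp2 N "flipd N d2" "flipd N d1" using b1 b2 flipd_brauer by unfold_locales
  fix x
  show "compose N (flipd N d2) (flipd N d1) x = flipd N (compose N d1 d2) x"
  proof (cases "x \<in> dots N")
    case False thus ?thesis by (simp add: compose_def flipd_def)
  next
    case x: True
    have fx: "fd x \<in> dots N" by (rule fd_dots[OF x])
    have P: "compose N d1 d2 (fd x) \<in> dots N" "compose N d1 d2 (fd x) \<noteq> fd x"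
       "(out_map (fd x), out_map (compose N d1 d2 (fd x))) \<in> c.E\<^sup>*"
      using c.compose_prop[OF fx] by auto
    have om: "\<And>z. z \<in> dots N \<Longrightarrow> rs (out_map z) = out_map (fd z)"
      by (auto simp: rs_def out_map_def fd_def dots_def)
    have "compose N (flipd N d2) (flipd N d1) x = fd (compose N d1 d2 (fd x))"
    proof (rule c'.compose_eq[OF x])
      show "fd (compose N d1 d2 (fd x)) \<in> dots N" using fd_dots P by blast
      show "fd (compose N d1 d2 (fd x)) \<noteq> x" using P fd_fd x by metis
      show "(out_map x, out_map (fd (compose N d1 d2 (fd x)))) \<in> c'.E\<^sup>*"
        using flip_path[OF b1 b2 P(3)] om[OF fx] om[OF P(1)] fd_fd[OF x] by simp
    qed
    thus ?thesis by (simp add: flipd_def x)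
  qed
qed

lemma edge1: "x \<in> dots N \<Longrightarrow> (top_map x, top_map (A x)) \<in> comp_edges N A B"
  unfolding comp_edges_def by blast
lemma edge2: "x \<in> dots N \<Longrightarrow> (bot_map x, bot_map (B x)) \<in> comp_edges N A B"
  unfolding comp_edges_def by blast

lemma p2: "(a, b) \<in> R \<Longrightarrow> (b, c) \<in> R \<Longrightarrow> (a, c) \<in> R\<^sup>*"
  by (meson r_into_rtrancl rtrancl_into_rtrancl)
lemma p3: "(a, b) \<in> R \<Longrightarrow> (b, c) \<in> R \<Longrightarrow> (c, d) \<in> R \<Longrightarrow> (a, d) \<in> R\<^sup>*"
  by (meson p2 rtrancl_into_rtrancl)
lemma p4: "(a, b) \<in> R \<Longrightarrow> (b, c) \<in> R \<Longrightarrow> (c, d) \<in> R \<Longrightarrow> (d, e) \<in> R \<Longrightarrow> (a, e) \<in> R\<^sup>*"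
  by (meson p3 rtrancl_into_rtrancl)
lemma p5: "(a, b) \<in> R \<Longrightarrow> (b, c) \<in> R \<Longrightarrow> (c, d) \<in> R \<Longrightarrow> (d, e) \<in> R \<Longrightarrow> (e, f) \<in> R \<Longrightarrow> (a, f) \<in> R\<^sup>*"
  by (meson p4 rtrancl_into_rtrancl)

lemma tm1[simp]: "top_map (k, Suc 0) = (0, k)" and tm0[simp]: "top_map (k, 0) = (Suc 0, k)"
  and bm1[simp]: "bot_map (k, Suc 0) = (Suc 0, k)" and bm0[simp]: "bot_map (k, 0) = (2, k)"
  and om1[simp]: "out_map (k, Suc 0) = (0, k)" and om0[simp]: "out_map (k, 0) = (2, k)"
  by (auto simp: top_map_def bot_map_def out_map_def)

definition inv_on :: "nat \<Rightarrow> (nat \<Rightarrow> nat) \<Rightarrow> bool" where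
  "inv_on N \<pi> \<longleftrightarrow> (\<forall>k. 1 \<le> k \<and> k \<le> N \<longrightarrow> 1 \<le> \<pi> k \<and> \<pi> k \<le> N \<and> \<pi> (\<pi> k) = k)"

definition Pd :: "nat \<Rightarrow> (nat \<Rightarrow> nat) \<Rightarrow> diagram" where
  "Pd N \<pi> = (\<lambda>(k, e). if (k, e) \<in> dots N then (\<pi> k, 1 - e) else (k, e))"

definition sb :: "(nat \<Rightarrow> nat) \<Rightarrow> dot \<Rightarrow> dot" where
  "sb \<pi> = (\<lambda>(k, e). (if e = 0 then \<pi> k else k, e))"
definition st' :: "(nat \<Rightarrow> nat) \<Rightarrow> dot \<Rightarrow> dot" where
  "st' \<pi> = (\<lambda>(k, e). (if e = 1 then \<pi> k else k, e))"

definition rb :: "nat \<Rightarrow> (nat \<Rightarrow> nat) \<Rightarrow> diagram \<Rightarrow> diagram" where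
  "rb N \<pi> d = (\<lambda>x. if x \<in> dots N then sb \<pi> (d (sb \<pi> x)) else x)"
definition rt :: "nat \<Rightarrow> (nat \<Rightarrow> nat) \<Rightarrow> diagram \<Rightarrow> diagram" where
  "rt N \<pi> d = (\<lambda>x. if x \<in> dots N then st' \<pi> (d (st' \<pi> x)) else x)"

lemma sb_dots: "inv_on N \<pi> \<Longrightarrow> x \<in> dots N \<Longrightarrow> sb \<pi> x \<in> dots N"
  by (cases x) (auto simp: sb_def inv_on_def dots_def)
lemma sb_sb: "inv_on N \<pi> \<Longrightarrow> x \<in> dots N \<Longrightarrow> sb \<pi> (sb \<pi> x) = x"
  by (cases x) (auto simp: sb_def inv_on_def dots_def)
lemma st_dots: "inv_on N \<pi> \<Longrightarrow> x \<in> dots N \<Longrightarrow> st' \<pi> x \<in> dots N"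
  by (cases x) (auto simp: st'_def inv_on_def dots_def)
lemma st_st: "inv_on N \<pi> \<Longrightarrow> x \<in> dots N \<Longrightarrow> st' \<pi> (st' \<pi> x) = x"
  by (cases x) (auto simp: st'_def inv_on_def dots_def)

lemma Pd_brauer: "inv_on N \<pi> \<Longrightarrow> brauer_diagram N (Pd N \<pi>)"
  unfolding brauer_diagram_def Pd_def inv_on_def by (auto simp: dots_def)

lemma Pd_simps: "1 \<le> k \<Longrightarrow> k \<le> N \<Longrightarrow> Pd N \<pi> (k, Suc 0) = (\<pi> k, 0)"
   "1 \<le> k \<Longrightarrow> k \<le> N \<Longrightarrow> Pd N \<pi> (k, 0) = (\<pi> k, 1)"
  by (auto simp: Pd_def dots_def)

lemma rb_brauer: "inv_on N \<pi> \<Longrightarrow> brauer_diagram N d \<Longrightarrow> brauer_diagram N (rb N \<pi> d)"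
  unfolding brauer_diagram_def rb_def
  by (auto simp: sb_dots sb_sb) (metis sb_dots sb_sb)+

lemma rb_rb: "inv_on N \<pi> \<Longrightarrow> brauer_diagram N d \<Longrightarrow> rb N \<pi> (rb N \<pi> d) = d"
proof (rule ext)
  fix x assume p: "inv_on N \<pi>" and b: "brauer_diagram N d"
  show "rb N \<pi> (rb N \<pi> d) x = d x"
  proof (cases "x \<in> dots N")
    case True
    have "d (sb \<pi> x) \<in> dots N" using brauer_in[OF b sb_dots[OF p True]] .
    moreover have "d x \<in> dots N" using brauer_in[OF b True] .
    ultimately show ?thesis using True p by (simp add: rb_def sb_dots sb_sb)
  next
    case False thus ?thesis using brauer_out[OF b False] by (simp add: rb_def)
  qed
qed

lemma rt_rt: "inv_on N \<pi> \<Longrightarrow> brauer_diagram N d \<Longrightarrow> rt N \<pi> (rt N \<pi> d) = d"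
proof (rule ext)
  fix x assume p: "inv_on N \<pi>" and b: "brauer_diagram N d"
  show "rt N \<pi> (rt N \<pi> d) x = d x"
  proof (cases "x \<in> dots N")
    case True
    have "d (st' \<pi> x) \<in> dots N" using brauer_in[OF b st_dots[OF p True]] .
    moreover have "d x \<in> dots N" using brauer_in[OF b True] .
    ultimately show ?thesis using True p by (simp add: rt_def st_dots st_st)
  next
    case False thus ?thesis using brauer_out[OF b False] by (simp add: rt_def)
  qed
qed

lemma compose_Pd_right:
  assumes p: "inv_on N \<pi>" and b: "brauer_diagram N d"
  shows "compose N d (Pd N \<pi>) = rb N \<pi> d"
proof
  interpret comp2 N d "Pd N \<pi>" using b Pd_brauer[OF p] by unfold_locales
  fix x
  show "compose N d (Pd N \<pi>) x = rb N \<pi> d x"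
  proof (cases "x \<in> dots N")
    case False thus ?thesis by (simp add: compose_def rb_def)
  next
    case x: True
    obtain k e where xk: "x = (k, e)" by fastforce
    have k: "1 \<le> k" "k \<le> N" "e = 0 \<or> e = 1" using x xk by (auto simp: dots_def)
    have pk: "1 \<le> \<pi> k" "\<pi> k \<le> N" "\<pi> (\<pi> k) = k" using p k by (auto simp: inv_on_def)
    have y: "rb N \<pi> d x \<in> dots N" using brauer_in[OF b sb_dots[OF p x]] sb_dots[OF p] x by (simp add: rb_def)
    show ?thesis
    proof (rule compose_eq[OF x y])
      show "rb N \<pi> d x \<noteq> x"
      proof
        assume "rb N \<pi> d x = x"
        hence "sb \<pi> (sb \<pi> (d (sb \<pi> x))) = sb \<pi> x" using x by (simp add: rb_def)
        hence "d (sb \<pi> x) = sb \<pi> x" using sb_sb[OF p] brauer_in[OF b sb_dots[OF p x]] by simp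
        thus False using brauer_ne[OF b sb_dots[OF p x]] by simp
      qed
      show "(out_map x, out_map (rb N \<pi> d x)) \<in> E\<^sup>*"
      proof (cases "e = 1")
        case True
        have sx: "sb \<pi> x = x" using xk True by (simp add: sb_def)
        obtain q f where z: "d x = (q, f)" by fastforce
        have q: "1 \<le> q" "q \<le> N" "f = 0 \<or> f = 1" using brauer_in[OF b x] z by (auto simp: dots_def)
        show ?thesis
        proof (cases "f = 1")
          case True
          have "rb N \<pi> d x = (q, 1)" using x sx z True by (simp add: rb_def sb_def)
          moreover have "(out_map x, top_map (q,1)) \<in> E" using edge1[OF x, where A=d and B="Pd N \<pi>"] z True xk \<open>e = 1\<close> by simp
          ultimately show ?thesis using xk \<open>e = 1\<close> by simp
        next
          case False
          hence f: "f = 0" using q by simp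
          have "rb N \<pi> d x = (\<pi> q, 0)" using x sx z f by (simp add: rb_def sb_def)
          moreover have "(out_map x, (1, q)) \<in> E" using edge1[OF x, where A=d and B="Pd N \<pi>"] z f xk \<open>e = 1\<close> by simp
          moreover have "((1, q), (2, \<pi> q)) \<in> E"
            using edge2[where x="(q,1)" and N=N and A=d and B="Pd N \<pi>"] q by (simp add: dots_def Pd_simps)
          ultimately show ?thesis by simp
        qed
      next
        case False
        hence e0: "e = 0" using k by simp
        have sx: "sb \<pi> x = (\<pi> k, 0)" using xk e0 by (simp add: sb_def)
        have px: "(\<pi> k, 0) \<in> dots N" using pk by (simp add: dots_def)
        obtain q f where z: "d (\<pi> k, 0) = (q, f)" by fastforce
        have q: "1 \<le> q" "q \<le> N" "f = 0 \<or> f = 1" using brauer_in[OF b px] z by (auto simp: dots_def)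
        have e1: "((2, k), (1, \<pi> k)) \<in> E"
          using edge2[where x="(k,0)" and N=N and A=d and B="Pd N \<pi>"] k by (simp add: dots_def Pd_simps)
        show ?thesis
        proof (cases "f = 1")
          case True
          have "rb N \<pi> d x = (q, 1)" using x sx z True by (simp add: rb_def sb_def)
          moreover have "((1, \<pi> k), (0, q)) \<in> E" using edge1[OF px, where A=d and B="Pd N \<pi>"] z True by simp
          ultimately show ?thesis using xk e0 e1 by simp
        next
          case False
          hence f: "f = 0" using q by simp
          have "rb N \<pi> d x = (\<pi> q, 0)" using x sx z f by (simp add: rb_def sb_def)
          moreover have e2: "((1, \<pi> k), (1, q)) \<in> E" using edge1[OF px, where A=d and B="Pd N \<pi>"] z f by simp
          moreover have e3: "((1, q), (2, \<pi> q)) \<in> E"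
            using edge2[where x="(q,1)" and N=N and A=d and B="Pd N \<pi>"] q by (simp add: dots_def Pd_simps)
          ultimately show ?thesis using xk e0 p3[OF e1 e2 e3] by simp
        qed
      qed
    qed
  qed
qed

lemma flipd_Pd: assumes p: "inv_on N \<pi>" shows "flipd N (Pd N \<pi>) = Pd N \<pi>"
proof
  fix x show "flipd N (Pd N \<pi>) x = Pd N \<pi> x"
  proof (cases "x \<in> dots N")
    case False
    obtain k e where xk: "x = (k, e)" by fastforce
    thus ?thesis using False by (simp add: flipd_def Pd_def)
  next
    case True
    obtain k e where xk: "x = (k, e)" by fastforce
    have k: "1 \<le> k" "k \<le> N" "e = 0 \<or> e = 1" using True xk by (auto simp: dots_def)
    have pk: "1 \<le> \<pi> k" "\<pi> k \<le> N" using p k by (auto simp: inv_on_def)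
    show ?thesis using k pk xk True by (auto simp: flipd_def Pd_def fd_def dots_def)
  qed
qed

lemma flipd_rb: assumes p: "inv_on N \<pi>" and b: "brauer_diagram N d"
  shows "flipd N (rb N \<pi> (flipd N d)) = rt N \<pi> d"
proof
  fix x show "flipd N (rb N \<pi> (flipd N d)) x = rt N \<pi> d x"
  proof (cases "x \<in> dots N")
    case False thus ?thesis by (simp add: flipd_def rt_def)
  next
    case x: True
    obtain k e where xk: "x = (k, e)" by fastforce
    have k: "1 \<le> k" "k \<le> N" "e = 0 \<or> e = 1" using x xk by (auto simp: dots_def)
    have a: "sb \<pi> (fd x) = fd (st' \<pi> x)" using xk k by (auto simp: sb_def fd_def st'_def)
    have sx: "st' \<pi> x \<in> dots N" by (rule st_dots[OF p x])
    have dx: "d (st' \<pi> x) \<in> dots N" by (rule brauer_in[OF b sx])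
    have c: "\<And>y. y \<in> dots N \<Longrightarrow> fd (sb \<pi> (fd y)) = st' \<pi> y"
      by (auto simp: sb_def fd_def st'_def dots_def)
    have "flipd N (rb N \<pi> (flipd N d)) x = fd (sb \<pi> (fd (d (fd (fd (st' \<pi> x))))))"
      using x fd_dots[OF x] sb_dots[OF p fd_dots[OF x]] a fd_dots[OF sx]
      by (simp add: flipd_def rb_def)
    also have "\<dots> = st' \<pi> (d (st' \<pi> x))" using fd_fd[OF sx] c[OF dx] by simp
    finally show ?thesis using x by (simp add: rt_def)
  qed
qed

lemma compose_Pd_left:
  assumes p: "inv_on N \<pi>" and b: "brauer_diagram N d"
  shows "compose N (Pd N \<pi>) d = rt N \<pi> d"
proof -
  have fb: "brauer_diagram N (flipd N d)" by (rule flipd_brauer[OF b])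
  have "compose N (Pd N \<pi>) d = compose N (flipd N (Pd N \<pi>)) (flipd N (flipd N d))"
    using flipd_Pd[OF p] flipd_flipd[OF b] by simp
  also have "\<dots> = flipd N (compose N (flipd N d) (Pd N \<pi>))"
    by (rule compose_flip[OF fb Pd_brauer[OF p]])
  also have "\<dots> = flipd N (rb N \<pi> (flipd N d))" using compose_Pd_right[OF p fb] by simp
  also have "\<dots> = rt N \<pi> d" by (rule flipd_rb[OF p b])
  finally show ?thesis .
qed

definition Cap :: "nat \<Rightarrow> nat \<Rightarrow> nat \<Rightarrow> diagram" where
  "Cap N a b = (\<lambda>(k, e). if (k, e) \<notin> dots N then (k, e) else if k = a then (b, e)
       else if k = b then (a, e) else (k, 1 - e))"

lemma E_Cap: "E_diag N j = Cap N j (j + 1)"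
  by (rule ext) (auto simp: E_diag_def Cap_def)

lemma Cap_brauer: "1 \<le> a \<Longrightarrow> a \<le> N \<Longrightarrow> 1 \<le> b \<Longrightarrow> b \<le> N \<Longrightarrow> a \<noteq> b \<Longrightarrow> brauer_diagram N (Cap N a b)"
  unfolding brauer_diagram_def Cap_def by (auto simp: dots_def)

lemma Cap_simps:
  assumes "1 \<le> a" "a \<le> N" "1 \<le> b" "b \<le> N" "a \<noteq> b"
  shows "e = 0 \<or> e = 1 \<Longrightarrow> Cap N a b (a, e) = (b, e)"
    and "e = 0 \<or> e = 1 \<Longrightarrow> Cap N a b (b, e) = (a, e)"
    and "1 \<le> k \<Longrightarrow> k \<le> N \<Longrightarrow> k \<noteq> a \<Longrightarrow> k \<noteq> b \<Longrightarrow> Cap N a b (k, Suc 0) = (k, 0)"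
    and "1 \<le> k \<Longrightarrow> k \<le> N \<Longrightarrow> k \<noteq> a \<Longrightarrow> k \<noteq> b \<Longrightarrow> Cap N a b (k, 0) = (k, Suc 0)"
  using assms by (auto simp: Cap_def dots_def)

definition capres :: "nat \<Rightarrow> nat \<Rightarrow> nat \<Rightarrow> diagram \<Rightarrow> diagram" where
  "capres N a b d = (\<lambda>x. if x \<notin> dots N then x else if x = (a, 1) then (b, 1) else if x = (b, 1) then (a, 1)
      else if x = (a, 0) then d (b, 1) else if x = d (b, 1) then (a, 0) else d x)"

lemma cap_lemma:
  assumes b: "brauer_diagram N d" and ab: "1 \<le> a" "a \<le> N" "1 \<le> b" "b \<le> N" "a \<noteq> b"
    and st: "d (a, 1) = (a, 0)"
  shows "compose N (Cap N a b) d = capres N a b d"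
proof
  interpret comp2 N "Cap N a b" d using b Cap_brauer[OF ab] by unfold_locales
  have adots: "(a, 0) \<in> dots N" "(a, 1) \<in> dots N" "(b, 1) \<in> dots N" "(b,0) \<in> dots N" using ab by (auto simp: dots_def)
  have da0: "d (a, 0) = (a, 1)" using brauer_inv[OF b adots(2)] st by simp
  define z where "z = d (b, 1)"
  have zd: "z \<in> dots N" using brauer_in[OF b adots(3)] z_def by simp
  have za0: "z \<noteq> (a, 0)" using da0 z_def ab by (metis Pair_inject brauer_inv[OF b adots(3)])
  have za1: "z \<noteq> (a, 1)" using st z_def ab by (metis Pair_inject brauer_inv[OF b adots(3)] zero_neq_one)
  have zb1: "z \<noteq> (b, 1)" using brauer_ne[OF b adots(3)] z_def by simp
  have dz: "d z = (b, 1)" using brauer_inv[OF b adots(3)] z_def by simp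
  have CS: "\<And>e. e = 0 \<or> e = 1 \<Longrightarrow> Cap N a b (a, e) = (b, e)" "\<And>e. e = 0 \<or> e = 1 \<Longrightarrow> Cap N a b (b, e) = (a, e)"
    "\<And>k. 1 \<le> k \<Longrightarrow> k \<le> N \<Longrightarrow> k \<noteq> a \<Longrightarrow> k \<noteq> b \<Longrightarrow> Cap N a b (k, Suc 0) = (k, 0)"
    "\<And>k. 1 \<le> k \<Longrightarrow> k \<le> N \<Longrightarrow> k \<noteq> a \<Longrightarrow> k \<noteq> b \<Longrightarrow> Cap N a b (k, 0) = (k, Suc 0)"
    using Cap_simps[OF ab] by auto
  have pathc: "(out_map (a, 0), out_map z) \<in> E\<^sup>*"
  proof -
    obtain p f where zp: "z = (p, f)" by fastforce
    have p: "1 \<le> p" "p \<le> N" "f = 0 \<or> f = 1" using zd zp by (auto simp: dots_def)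
    have e1: "((2, a), (1, a)) \<in> E" using edge2[OF adots(1), where A="Cap N a b" and B=d] da0 by simp
    have e2: "((1, a), (1, b)) \<in> E" using edge1[OF adots(1), where A="Cap N a b" and B=d] CS(1)[of 0] by simp
    show ?thesis
    proof (cases "f = 0")
      case True
      have e3: "((1, b), (2, p)) \<in> E" using edge2[OF adots(3), where A="Cap N a b" and B=d] z_def[symmetric] zp True by simp
      show ?thesis using p3[OF e1 e2 e3] zp True by simp
    next
      case False
      hence f: "f = 1" using p by simp
      have pa: "p \<noteq> a" using za1 zp f by simp
      have pb: "p \<noteq> b" using zb1 zp f by simp
      have e3: "((1, b), (1, p)) \<in> E" using edge2[OF adots(3), where A="Cap N a b" and B=d] z_def[symmetric] zp f by simp
      have e4: "((1, p), (0, p)) \<in> E" using edge1[where x="(p,0)" and A="Cap N a b" and B=d] CS(4)[OF p(1,2) pa pb] p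
        by (simp add: dots_def)
      show ?thesis using p4[OF e1 e2 e3 e4] zp f by simp
    qed
  qed
  fix x
  show "compose N (Cap N a b) d x = capres N a b d x"
  proof (cases "x \<in> dots N")
    case False thus ?thesis by (simp add: compose_def capres_def)
  next
    case x: True
    obtain k e where xk: "x = (k, e)" by fastforce
    have k: "1 \<le> k" "k \<le> N" "e = 0 \<or> e = 1" using x xk by (auto simp: dots_def)
    consider "x = (a, 1)" | "x = (b, 1)" | "x = (a, 0)" | "x = z \<and> x \<noteq> (a,1) \<and> x \<noteq> (b,1) \<and> x \<noteq> (a,0)"
      | "x \<noteq> (a,1) \<and> x \<noteq> (b,1) \<and> x \<noteq> (a,0) \<and> x \<noteq> z" by blast
    thus ?thesis
    proof cases
      case 1
      have "((0, a), (0, b)) \<in> E" using edge1[OF adots(2), where A="Cap N a b" and B=d] CS(1)[of 1] by simp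
      thus ?thesis using 1 ab adots by (intro compose_eq) (auto simp: capres_def)
    next
      case 2
      have "((0, b), (0, a)) \<in> E" using edge1[OF adots(3), where A="Cap N a b" and B=d] CS(2)[of 1] by simp
      thus ?thesis using 2 ab adots by (intro compose_eq) (auto simp: capres_def)
    next
      case 3
      have "compose N (Cap N a b) d x = z" using 3 pathc zd za0 adots by (intro compose_eq) auto
      thus ?thesis using 3 adots ab by (simp add: capres_def z_def)
    next
      case 4
      have "compose N (Cap N a b) d x = (a, 0)" using 4 pathc zd za0 adots Estar_sym by (intro compose_eq) auto
      moreover have "capres N a b d x = (a, 0)" using 4 zd za0 za1 zb1
        unfolding capres_def z_def[symmetric] by auto
      ultimately show ?thesis by simp
    next
      case 5
      define w where "w = d x"
      have wd: "w \<in> dots N" using brauer_in[OF b x] w_def by simp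
      have wx: "w \<noteq> x" using brauer_ne[OF b x] w_def by simp
      obtain p f where wp: "w = (p, f)" by fastforce
      have p: "1 \<le> p" "p \<le> N" "f = 0 \<or> f = 1" using wd wp by (auto simp: dots_def)
      have wa1: "w \<noteq> (a, 1)" using 5 st w_def brauer_inv[OF b x] by auto
      have wb1: "w \<noteq> (b, 1)" using 5 dz w_def brauer_inv[OF b x] z_def by auto
      have wa0: "w \<noteq> (a, 0)" using 5 da0 w_def brauer_inv[OF b x] by auto
      have cr: "capres N a b d x = w" using 5 x by (simp add: capres_def w_def z_def)
      have endp: "(out_map x, out_map w) \<in> E\<^sup>*"
      proof (cases "e = 1")
        case True
        have ka: "k \<noteq> a" "k \<noteq> b" using 5 xk True by auto
        have e1: "((0, k), (1, k)) \<in> E" using edge1[OF x, where A="Cap N a b" and B=d] CS(3)[OF k(1,2) ka] xk True by simp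
        show ?thesis
        proof (cases "f = 0")
          case True
          have e2: "((1, k), (2, p)) \<in> E" using edge2[OF x, where A="Cap N a b" and B=d] w_def[symmetric] wp True xk \<open>e = 1\<close> by simp
          show ?thesis using p2[OF e1 e2] xk \<open>e = 1\<close> wp True by simp
        next
          case False
          hence f: "f = 1" using p by simp
          have pa: "p \<noteq> a" "p \<noteq> b" using wa1 wb1 wp f by auto
          have e2: "((1, k), (1, p)) \<in> E" using edge2[OF x, where A="Cap N a b" and B=d] w_def[symmetric] wp f xk \<open>e = 1\<close> by simp
          have e3: "((1, p), (0, p)) \<in> E" using edge1[where x="(p,0)" and A="Cap N a b" and B=d] CS(4)[OF p(1,2) pa] p
            by (simp add: dots_def)
          show ?thesis using p3[OF e1 e2 e3] xk \<open>e = 1\<close> wp f by simp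
        qed
      next
        case False
        hence e0: "e = 0" using k by simp
        show ?thesis
        proof (cases "f = 0")
          case True
          have e1: "((2, k), (2, p)) \<in> E" using edge2[OF x, where A="Cap N a b" and B=d] w_def[symmetric] wp True xk e0 by simp
          show ?thesis using e1 xk e0 wp True by simp
        next
          case False
          hence f: "f = 1" using p by simp
          have pa: "p \<noteq> a" "p \<noteq> b" using wa1 wb1 wp f by auto
          have e1: "((2, k), (1, p)) \<in> E" using edge2[OF x, where A="Cap N a b" and B=d] w_def[symmetric] wp f xk e0 by simp
          have e2: "((1, p), (0, p)) \<in> E" using edge1[where x="(p,0)" and A="Cap N a b" and B=d] CS(4)[OF p(1,2) pa] p
            by (simp add: dots_def)
          show ?thesis using p2[OF e1 e2] xk e0 wp f by simp
        qed
      qed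
      have "compose N (Cap N a b) d x = w" using compose_eq[OF x wd wx endp] .
      thus ?thesis using cr by simp
    qed
  qed
qed

lemma conj_Cap:
  assumes p: "inv_on N \<pi>" and ab: "1 \<le> a" "a \<le> N" "1 \<le> b" "b \<le> N" "a \<noteq> b"
  shows "rt N \<pi> (rb N \<pi> (Cap N a b)) = Cap N (\<pi> a) (\<pi> b)"
proof
  fix x show "rt N \<pi> (rb N \<pi> (Cap N a b)) x = Cap N (\<pi> a) (\<pi> b) x"
  proof (cases "x \<in> dots N")
    case False
    obtain k e where "x = (k, e)" by fastforce
    thus ?thesis using False by (simp add: rt_def Cap_def)
  next
    case x: True
    obtain k e where xk: "x = (k, e)" by fastforce
    have k: "1 \<le> k" "k \<le> N" "e = 0 \<or> e = 1" using x xk by (auto simp: dots_def)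
    have pk: "1 \<le> \<pi> k" "\<pi> k \<le> N" "\<pi> (\<pi> k) = k" using p k by (auto simp: inv_on_def)
    have pa: "\<pi> (\<pi> a) = a" "\<pi> (\<pi> b) = b" "1 \<le> \<pi> a" "\<pi> a \<le> N" "1 \<le> \<pi> b" "\<pi> b \<le> N"
      using p ab by (auto simp: inv_on_def)
    have i1: "\<pi> k = a \<longleftrightarrow> k = \<pi> a" using pk pa by metis
    have i2: "\<pi> k = b \<longleftrightarrow> k = \<pi> b" using pk pa by metis
    have sx: "st' \<pi> x \<in> dots N" by (rule st_dots[OF p x])
    have "rt N \<pi> (rb N \<pi> (Cap N a b)) x = st' \<pi> (sb \<pi> (Cap N a b (sb \<pi> (st' \<pi> x))))"
      using x sx by (simp add: rt_def rb_def)
    also have "sb \<pi> (st' \<pi> x) = (\<pi> k, e)" using xk k by (auto simp: sb_def st'_def)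
    finally show ?thesis using xk k pk pa i1 i2 ab
      by (auto simp: Cap_def dots_def sb_def st'_def)
  qed
qed

lemma rb_Pd:
  assumes p: "inv_on N \<pi>" and t: "inv_on N \<tau>"
    and r: "\<And>k. 1 \<le> k \<Longrightarrow> k \<le> N \<Longrightarrow> \<pi> (\<tau> k) = \<rho> k \<and> \<tau> (\<pi> k) = \<rho> k"
  shows "rb N \<pi> (Pd N \<tau>) = Pd N \<rho>"
proof
  fix x show "rb N \<pi> (Pd N \<tau>) x = Pd N \<rho> x"
  proof (cases "x \<in> dots N")
    case False
    obtain k e where "x = (k, e)" by fastforce
    thus ?thesis using False by (simp add: rb_def Pd_def)
  next
    case x: True
    obtain k e where xk: "x = (k, e)" by fastforce
    have k: "1 \<le> k" "k \<le> N" "e = 0 \<or> e = 1" using x xk by (auto simp: dots_def)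
    have pk: "1 \<le> \<pi> k" "\<pi> k \<le> N" "1 \<le> \<tau> k" "\<tau> k \<le> N" using p t k by (auto simp: inv_on_def)
    show ?thesis using xk k pk r[OF k(1,2)] by (auto simp: rb_def Pd_def sb_def dots_def)
  qed
qed

lemma diag_eqI:
  fixes d d' :: diagram
  assumes "\<And>k e. (k, e) \<notin> dots N \<Longrightarrow> d (k, e) = d' (k, e)"
    and "\<And>k. 1 \<le> k \<Longrightarrow> k \<le> N \<Longrightarrow> d (k, 0) = d' (k, 0)"
    and "\<And>k. 1 \<le> k \<Longrightarrow> k \<le> N \<Longrightarrow> d (k, Suc 0) = d' (k, Suc 0)"
  shows "d = d'"
proof
  fix x :: dot
  obtain k e where xk: "x = (k, e)" by fastforce
  show "d x = d' x"
  proof (cases "(k, e) \<in> dots N")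
    case True
    hence "1 \<le> k" "k \<le> N" "e = 0 \<or> e = 1" by (auto simp: dots_def)
    thus ?thesis using assms(2,3) xk by auto
  qed (use assms(1) xk in auto)
qed

lemma notdots: "(k, e) \<notin> dots N \<longleftrightarrow> \<not> (1 \<le> k \<and> k \<le> N \<and> (e = 0 \<or> e = 1))"
  by (auto simp: dots_def)

definition swp :: "nat \<Rightarrow> nat \<Rightarrow> nat" where
  "swp j k = (if k = j then Suc j else if k = Suc j then j else k)"

lemma R_Pd: "R_diag N j = Pd N (swp j)"
  by (rule ext) (auto simp: R_diag_def Pd_def swp_def)

lemma swp_inv: "1 \<le> j \<Longrightarrow> j < N \<Longrightarrow> inv_on N (swp j)"
  by (auto simp: inv_on_def swp_def)

definition piS :: "nat \<Rightarrow> nat \<Rightarrow> nat \<Rightarrow> nat" where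
  "piS n i = (\<lambda>k. swp (2 * n - i) (swp i k))"

lemma swp_comm: "Suc a < b \<Longrightarrow> swp a (swp b k) = swp b (swp a k)"
  by (auto simp: swp_def)

lemma piS_inv: "1 \<le> i \<Longrightarrow> i < n \<Longrightarrow> inv_on (2 * n) (piS n i)"
  by (auto simp: inv_on_def swp_def piS_def)

lemma compose_RR:
  assumes "1 \<le> a" "Suc a < b" "b < N"
  shows "compose N (R_diag N a) (R_diag N b) = Pd N (\<lambda>k. swp b (swp a k))"
proof -
  have ia: "inv_on N (swp a)" and ib: "inv_on N (swp b)" using assms swp_inv by auto
  have "compose N (R_diag N a) (R_diag N b) = rb N (swp b) (Pd N (swp a))"
    unfolding R_Pd by (rule compose_Pd_right[OF ib Pd_brauer[OF ia]])
  also have "\<dots> = Pd N (\<lambda>k. swp b (swp a k))"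
    by (rule rb_Pd[OF ib ia]) (use swp_comm assms in auto)
  finally show ?thesis .
qed

lemma compose_RR':
  assumes "1 \<le> a" "Suc a < b" "b < N"
  shows "compose N (R_diag N b) (R_diag N a) = Pd N (\<lambda>k. swp b (swp a k))"
proof -
  have ia: "inv_on N (swp a)" and ib: "inv_on N (swp b)" using assms swp_inv by auto
  have "compose N (R_diag N b) (R_diag N a) = rb N (swp a) (Pd N (swp b))"
    unfolding R_Pd by (rule compose_Pd_right[OF ia Pd_brauer[OF ib]])
  also have "\<dots> = Pd N (\<lambda>k. swp b (swp a k))"
    by (rule rb_Pd[OF ia ib]) (use swp_comm assms in auto)
  finally show ?thesis .
qed

lemma E_Cap': "E_diag N j = Cap N j (Suc j)" by (simp add: E_Cap)

definition Cap2 :: "nat \<Rightarrow> nat \<Rightarrow> nat \<Rightarrow> diagram" where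
  "Cap2 N a b = (\<lambda>(k, e). if (k, e) \<notin> dots N then (k, e) else if k = a then (Suc a, e)
       else if k = Suc a then (a, e) else if k = b then (Suc b, e) else if k = Suc b then (b, e) else (k, 1 - e))"

lemma compose_EE:
  assumes "1 \<le> a" "Suc a < b" "b < N"
  shows "compose N (E_diag N a) (E_diag N b) = Cap2 N a b"
proof -
  have "compose N (E_diag N a) (E_diag N b) = capres N a (Suc a) (Cap N b (Suc b))"
    unfolding E_Cap' using assms
    by (intro cap_lemma Cap_brauer) (auto simp: Cap_def dots_def)
  also have "\<dots> = Cap2 N a b"
    using assms by (intro diag_eqI) (auto simp: capres_def Cap_def Cap2_def notdots)
  finally show ?thesis .
qed

lemma compose_EE':
  assumes "1 \<le> a" "Suc a < b" "b < N"
  shows "compose N (E_diag N b) (E_diag N a) = Cap2 N a b"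
proof -
  have "compose N (E_diag N b) (E_diag N a) = capres N b (Suc b) (Cap N a (Suc a))"
    unfolding E_Cap' using assms
    by (intro cap_lemma Cap_brauer) (auto simp: Cap_def dots_def)
  also have "\<dots> = Cap2 N a b"
    using assms by (intro diag_eqI) (auto simp: capres_def Cap_def Cap2_def notdots)
  finally show ?thesis .
qed

lemma id_brauer: "brauer_diagram N (id_diag N)"
  unfolding brauer_diagram_def id_diag_def by (auto simp: dots_def)

lemma flipd_eqI: "(\<And>k e. (k, e) \<notin> dots N \<Longrightarrow> d (k, e) = (k, e)) \<Longrightarrow> (\<And>k e. (k, e) \<in> dots N \<Longrightarrow> fd (d (fd (k, e))) = d (k, e)) \<Longrightarrow> flipd N d = d"
  by (rule diag_eqI) (auto simp: flipd_def)

lemma flipd_id: "flipd N (id_diag N) = id_diag N"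
  by (rule flipd_eqI) (auto simp: id_diag_def fd_def dots_def)

lemma flipd_Cap: "flipd N (Cap N a b) = Cap N a b"
  by (rule flipd_eqI) (auto simp: Cap_def fd_def dots_def)

inductive_set Gd :: "nat \<Rightarrow> diagram set" for n where
  gid: "id_diag (2 * n) \<in> Gd n"
| gR: "R_diag (2 * n) n \<in> Gd n"
| gE: "E_diag (2 * n) n \<in> Gd n"
| gS: "0 < i \<Longrightarrow> i < n \<Longrightarrow> compose (2 * n) (R_diag (2 * n) (n - i)) (R_diag (2 * n) (n + i)) \<in> Gd n"
| gF: "0 < i \<Longrightarrow> i < n \<Longrightarrow> compose (2 * n) (E_diag (2 * n) (n - i)) (E_diag (2 * n) (n + i)) \<in> Gd n"
| gc: "a \<in> Gd n \<Longrightarrow> b \<in> Gd n \<Longrightarrow> compose (2 * n) a b \<in> Gd n"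

lemma R_brauer: "1 \<le> j \<Longrightarrow> j < N \<Longrightarrow> brauer_diagram N (R_diag N j)"
  unfolding R_Pd by (rule Pd_brauer[OF swp_inv])
lemma E_brauer: "1 \<le> j \<Longrightarrow> j < N \<Longrightarrow> brauer_diagram N (E_diag N j)"
  unfolding E_Cap' by (rule Cap_brauer) auto

lemma compose_brauer': "brauer_diagram N a \<Longrightarrow> brauer_diagram N b \<Longrightarrow> brauer_diagram N (compose N a b)"
proof -
  assume "brauer_diagram N a" "brauer_diagram N b"
  then interpret comp2 N a b by unfold_locales
  show ?thesis by (rule compose_brauer)
qed

lemma Gd_brauer: assumes nn: "1 \<le> n" shows "d \<in> Gd n \<Longrightarrow> brauer_diagram (2 * n) d"
proof (induction rule: Gd.induct)
  case gid thus ?case by (rule id_brauer)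
next
  case gR thus ?case using nn by (intro R_brauer) auto
next
  case gE thus ?case using nn by (intro E_brauer) auto
next
  case (gS i) thus ?case by (intro compose_brauer' R_brauer) auto
next
  case (gF i) thus ?case by (intro compose_brauer' E_brauer) auto
next
  case (gc a b) thus ?case by (intro compose_brauer') auto
qed

lemma basis_compose_in:
  assumes a: "brauer_diagram N a" and b: "brauer_diagram N b"
    and m: "br_mult N (basis_elem a) (basis_elem b) \<in> gen_subalg N G"
  shows "basis_elem (compose N a b) \<in> gen_subalg N G"
proof -
  let ?L = "loops N a b"
  have "(\<lambda>d. fls_X_inv ^ ?L * br_mult N (basis_elem a) (basis_elem b) d) \<in> gen_subalg N G"
    by (rule gen_subalg.smult[OF lp_pow[OF lp_Xinv] m])
  moreover have "(\<lambda>d. fls_X_inv ^ ?L * br_mult N (basis_elem a) (basis_elem b) d) = basis_elem (compose N a b)"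
    unfolding br_mult_basis[OF a b] by (rule ext) (simp add: basis_elem_def Xinv_X_pow)
  ultimately show ?thesis by simp
qed

lemma Gd_G: assumes nn: "1 \<le> n" shows "d \<in> Gd n \<Longrightarrow> basis_elem d \<in> phi_image n"
proof (induction rule: Gd.induct)
  case gid thus ?case unfolding phi_image_def by (rule gen_subalg.one)
next
  case gR thus ?case unfolding phi_image_def by (intro gen_subalg.gen) (simp add: phi_gens_def)
next
  case gE thus ?case unfolding phi_image_def by (intro gen_subalg.gen) (simp add: phi_gens_def)
next
  case (gS i)
  thus ?case unfolding phi_image_def
    by (intro basis_compose_in R_brauer gen_subalg.gen) (auto simp: phi_gens_def)
next
  case (gF i)
  thus ?case unfolding phi_image_def
    by (intro basis_compose_in E_brauer gen_subalg.gen) (auto simp: phi_gens_def)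
next
  case (gc a b)
  thus ?case unfolding phi_image_def
    by (intro basis_compose_in gen_subalg.mult Gd_brauer[OF nn]) (auto simp: phi_image_def)
qed

lemma flipd_R: "1 \<le> j \<Longrightarrow> j < N \<Longrightarrow> flipd N (R_diag N j) = R_diag N j"
  unfolding R_Pd by (rule flipd_Pd[OF swp_inv])
lemma flipd_E: "flipd N (E_diag N j) = E_diag N j"
  unfolding E_Cap' by (rule flipd_Cap)

lemma Gd_flip: assumes nn: "1 \<le> n" shows "d \<in> Gd n \<Longrightarrow> flipd (2 * n) d \<in> Gd n"
proof (induction rule: Gd.induct)
  case gid thus ?case by (simp add: flipd_id Gd.gid)
next
  case gR thus ?case using flipd_R[of n "2*n"] Gd.gR nn by simp
next
  case gE thus ?case using flipd_E Gd.gE by simp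
next
  case (gS i)
  let ?a = "n - i" and ?b = "n + i"
  have ab: "1 \<le> ?a" "Suc ?a < ?b" "?b < 2 * n" using gS by auto
  have "flipd (2*n) (compose (2*n) (R_diag (2*n) ?a) (R_diag (2*n) ?b)) =
        compose (2*n) (flipd (2*n) (R_diag (2*n) ?b)) (flipd (2*n) (R_diag (2*n) ?a))"
    using compose_flip[OF R_brauer R_brauer] ab by simp
  also have "\<dots> = compose (2*n) (R_diag (2*n) ?b) (R_diag (2*n) ?a)"
    using flipd_R ab by simp
  also have "\<dots> = compose (2*n) (R_diag (2*n) ?a) (R_diag (2*n) ?b)"
    using compose_RR[OF ab] compose_RR'[OF ab] by simp
  finally show ?case using Gd.gS[OF gS(1,2)] by simp
next
  case (gF i)
  let ?a = "n - i" and ?b = "n + i"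
  have ab: "1 \<le> ?a" "Suc ?a < ?b" "?b < 2 * n" using gF by auto
  have "flipd (2*n) (compose (2*n) (E_diag (2*n) ?a) (E_diag (2*n) ?b)) =
        compose (2*n) (flipd (2*n) (E_diag (2*n) ?b)) (flipd (2*n) (E_diag (2*n) ?a))"
    using compose_flip[OF E_brauer E_brauer] ab by simp
  also have "\<dots> = compose (2*n) (E_diag (2*n) ?b) (E_diag (2*n) ?a)"
    using flipd_E by simp
  also have "\<dots> = compose (2*n) (E_diag (2*n) ?a) (E_diag (2*n) ?b)"
    using compose_EE[OF ab] compose_EE'[OF ab] by simp
  finally show ?case using Gd.gF[OF gF(1,2)] by simp
next
  case (gc a b)
  have "flipd (2*n) (compose (2*n) a b) = compose (2*n) (flipd (2*n) b) (flipd (2*n) a)"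
    using compose_flip[OF Gd_brauer[OF nn] Gd_brauer[OF nn]] gc by simp
  thus ?case using gc Gd.gc by simp
qed

definition mvp :: "nat \<Rightarrow> nat \<Rightarrow> nat \<Rightarrow> nat" where
  "mvp n p = (if p \<le> n then piS n (p - 1) else if p = Suc n then swp n else piS n (2 * n + 1 - p))"

lemma piS_Gd: "1 \<le> i \<Longrightarrow> i < n \<Longrightarrow> Pd (2 * n) (piS n i) \<in> Gd n"
proof -
  assume i: "1 \<le> i" "i < n"
  have "compose (2*n) (R_diag (2*n) (n - (n - i))) (R_diag (2*n) (n + (n - i))) \<in> Gd n"
    using i by (intro Gd.gS) auto
  moreover have "n - (n - i) = i" "n + (n - i) = 2 * n - i" using i by auto
  ultimately have "compose (2*n) (R_diag (2*n) i) (R_diag (2*n) (2 * n - i)) \<in> Gd n" by simp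
  moreover have "compose (2*n) (R_diag (2*n) i) (R_diag (2*n) (2 * n - i)) = Pd (2 * n) (piS n i)"
    unfolding piS_def using i by (intro compose_RR) auto
  ultimately show ?thesis by simp
qed

lemma mv_Gd: "2 \<le> p \<Longrightarrow> p \<le> 2 * n \<Longrightarrow> Pd (2 * n) (mvp n p) \<in> Gd n"
  unfolding mvp_def using piS_Gd Gd.gR R_Pd by auto

lemma mv_inv: "1 \<le> n \<Longrightarrow> 2 \<le> p \<Longrightarrow> p \<le> 2 * n \<Longrightarrow> inv_on (2 * n) (mvp n p)"
  unfolding mvp_def using piS_inv swp_inv by auto

lemma piS_eq: "piS n i k = (if k = i then Suc i else if k = Suc i then i else if k = 2 * n - i then 2 * n + 1 - i
   else if k = 2 * n + 1 - i then 2 * n - i else k)" if "1 \<le> i" "i < n"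
  using that unfolding piS_def swp_def by auto

lemma mv_p: "2 \<le> p \<Longrightarrow> p \<le> 2 * n \<Longrightarrow> mvp n p p = p - 1"
  unfolding mvp_def by (auto simp: piS_eq swp_def)

lemma mv_fix: "2 \<le> p \<Longrightarrow> p \<le> 2 * n \<Longrightarrow> k \<noteq> p - 1 \<Longrightarrow> k \<noteq> p \<Longrightarrow> k \<noteq> 2 * n + 1 - p \<Longrightarrow> k \<noteq> 2 * n + 2 - p \<Longrightarrow> mvp n p k = k"
  unfolding mvp_def by (auto simp: piS_eq swp_def)

lemma piS_refl: assumes "1 \<le> i" "i < n" "1 \<le> k" "k \<le> 2 * n"
  shows "piS n i (2 * n + 1 - k) = 2 * n + 1 - piS n i k"
proof -
  consider "k = i" | "k = Suc i" | "k = 2*n - i" | "k = 2*n+1-i" | "k \<noteq> i \<and> k \<noteq> Suc i \<and> k \<noteq> 2*n - i \<and> k \<noteq> 2*n+1-i" by blast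
  thus ?thesis
  proof cases
    case 5
    hence "2*n+1-k \<noteq> i \<and> 2*n+1-k \<noteq> Suc i \<and> 2*n+1-k \<noteq> 2*n - i \<and> 2*n+1-k \<noteq> 2*n+1-i" using assms by auto
    thus ?thesis using 5 assms by (simp add: piS_eq)
  qed (use assms in \<open>auto simp: piS_eq\<close>)
qed

lemma swp_refl: assumes "1 \<le> k" "k \<le> 2 * n" shows "swp n (2 * n + 1 - k) = 2 * n + 1 - swp n k"
proof -
  consider "k = n" | "k = Suc n" | "k \<noteq> n \<and> k \<noteq> Suc n" by blast
  thus ?thesis
  proof cases
    case 3
    hence "2*n+1-k \<noteq> n \<and> 2*n+1-k \<noteq> Suc n" using assms by auto
    thus ?thesis using 3 by (simp add: swp_def)
  qed (use assms in \<open>auto simp: swp_def\<close>)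
qed

lemma mv_refl: "2 \<le> p \<Longrightarrow> p \<le> 2 * n \<Longrightarrow> 1 \<le> k \<Longrightarrow> k \<le> 2 * n \<Longrightarrow> mvp n p (2 * n + 1 - k) = 2 * n + 1 - mvp n p k"
  unfolding mvp_def using piS_refl swp_refl by auto

definition Dj :: "nat \<Rightarrow> nat \<Rightarrow> diagram \<Rightarrow> bool" where
  "Dj n j d \<longleftrightarrow> brauer_diagram (2 * n) d \<and> symmetric_diag (2 * n) d \<and> (\<forall>i. 1 \<le> i \<and> i < j \<longrightarrow> d (i, 1) = (i, 0))"

lemma reflect_simp[simp]: "reflect N (k, e) = (N + 1 - k, e)"
  by (simp add: reflect_def)

lemma Dj_refl: "Dj n j d \<Longrightarrow> 1 \<le> k \<Longrightarrow> k \<le> 2 * n \<Longrightarrow> e = 0 \<or> e = 1 \<Longrightarrow> d (2 * n + 1 - k, e) = reflect (2 * n) (d (k, e))"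
  unfolding Dj_def symmetric_diag_def by (auto simp: dots_def)

lemma Dj_str:
  assumes D: "Dj n j d" and i: "1 \<le> i" "i < j" and jn: "j \<le> n + 1"
  shows "d (i, 1) = (i, 0)" "d (i, 0) = (i, 1)" "d (2 * n + 1 - i, 1) = (2 * n + 1 - i, 0)" "d (2 * n + 1 - i, 0) = (2 * n + 1 - i, 1)"
proof -
  have b: "brauer_diagram (2 * n) d" using D by (simp add: Dj_def)
  show s1: "d (i, 1) = (i, 0)" using D i by (simp add: Dj_def)
  have id: "(i, 1) \<in> dots (2 * n)" using i jn by (auto simp: dots_def)
  show s2: "d (i, 0) = (i, 1)" using brauer_inv[OF b id] s1 by simp
  show "d (2 * n + 1 - i, 1) = (2 * n + 1 - i, 0)" using Dj_refl[OF D, of i 1] s1 i jn by simp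
  show "d (2 * n + 1 - i, 0) = (2 * n + 1 - i, 1)" using Dj_refl[OF D, of i 0] s2 i jn by simp
qed

lemma Dj_inner:
  assumes D: "Dj n j d" and j: "1 \<le> j" "j \<le> n + 1" and k: "j \<le> k" "k \<le> 2 * n + 1 - j" and e: "e = 0 \<or> e = 1"
    and dk: "d (k, e) = (p, f)"
  shows "j \<le> p \<and> p \<le> 2 * n + 1 - j \<and> (f = 0 \<or> f = 1)"
proof -
  have b: "brauer_diagram (2 * n) d" using D by (simp add: Dj_def)
  have kd: "(k, e) \<in> dots (2 * n)" using j k e by (auto simp: dots_def)
  have pd: "(p, f) \<in> dots (2 * n)" using brauer_in[OF b kd] dk by simp
  hence p: "1 \<le> p" "p \<le> 2 * n" "f = 0 \<or> f = 1" by (auto simp: dots_def)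
  have inv: "d (p, f) = (k, e)" using brauer_inv[OF b kd] dk by simp
  have "\<not> p < j"
  proof
    assume "p < j"
    hence "d (p, f) = (p, 1 - f)" using Dj_str[OF D p(1) _ j(2)] p(3) by auto
    thus False using inv \<open>p < j\<close> k by simp
  qed
  moreover have "\<not> p > 2 * n + 1 - j"
  proof
    assume a: "p > 2 * n + 1 - j"
    define i where "i = 2 * n + 1 - p"
    have i: "1 \<le> i" "i < j" "p = 2 * n + 1 - i" using a p i_def by auto
    hence "d (p, f) = (p, 1 - f)" using Dj_str[OF D i(1,2) j(2)] p(3) by auto
    thus False using inv a k by simp
  qed
  ultimately show ?thesis using p by simp
qed

definition refl_comm :: "nat \<Rightarrow> (nat \<Rightarrow> nat) \<Rightarrow> bool" where
  "refl_comm N \<pi> \<longleftrightarrow> (\<forall>k. 1 \<le> k \<and> k \<le> N \<longrightarrow> \<pi> (N + 1 - k) = N + 1 - \<pi> k)"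

lemma rb_sym:
  assumes p: "inv_on N \<pi>" and r: "refl_comm N \<pi>" and s: "symmetric_diag N d" and bb: "brauer_diagram N d"
  shows "symmetric_diag N (rb N \<pi> d)"
  unfolding symmetric_diag_def
proof
  fix x assume x: "x \<in> dots N"
  have c: "\<And>y. y \<in> dots N \<Longrightarrow> sb \<pi> (reflect N y) = reflect N (sb \<pi> y)"
  proof -
    fix y assume y: "y \<in> dots N"
    obtain k e where yk: "y = (k, e)" by fastforce
    have "1 \<le> k" "k \<le> N" "1 \<le> \<pi> k" "\<pi> k \<le> N" using y yk p by (auto simp: dots_def inv_on_def)
    thus "sb \<pi> (reflect N y) = reflect N (sb \<pi> y)" using r yk by (auto simp: sb_def refl_comm_def)
  qed
  have rx: "reflect N x \<in> dots N" by (rule reflect_dots[OF x])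
  have sx: "sb \<pi> x \<in> dots N" by (rule sb_dots[OF p x])
  have "rb N \<pi> d (reflect N x) = sb \<pi> (d (sb \<pi> (reflect N x)))" using rx by (simp add: rb_def)
  also have "\<dots> = sb \<pi> (d (reflect N (sb \<pi> x)))" using c[OF x] by simp
  also have "\<dots> = sb \<pi> (reflect N (d (sb \<pi> x)))" using s sx by (simp add: symmetric_diag_def)
  also have "\<dots> = reflect N (sb \<pi> (d (sb \<pi> x)))" using c[OF brauer_in[OF bb sx]] .
  also have "\<dots> = reflect N (rb N \<pi> d x)" using x by (simp add: rb_def)
  finally show "rb N \<pi> d (reflect N x) = reflect N (rb N \<pi> d x)" .
qed

lemma rt_sym:
  assumes p: "inv_on N \<pi>" and r: "refl_comm N \<pi>" and s: "symmetric_diag N d" and bb: "brauer_diagram N d"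
  shows "symmetric_diag N (rt N \<pi> d)"
  unfolding symmetric_diag_def
proof
  fix x assume x: "x \<in> dots N"
  have c: "\<And>y. y \<in> dots N \<Longrightarrow> st' \<pi> (reflect N y) = reflect N (st' \<pi> y)"
  proof -
    fix y assume y: "y \<in> dots N"
    obtain k e where yk: "y = (k, e)" by fastforce
    have "1 \<le> k" "k \<le> N" "1 \<le> \<pi> k" "\<pi> k \<le> N" using y yk p by (auto simp: dots_def inv_on_def)
    thus "st' \<pi> (reflect N y) = reflect N (st' \<pi> y)" using r yk by (auto simp: st'_def refl_comm_def)
  qed
  have rx: "reflect N x \<in> dots N" by (rule reflect_dots[OF x])
  have sx: "st' \<pi> x \<in> dots N" by (rule st_dots[OF p x])
  have "rt N \<pi> d (reflect N x) = st' \<pi> (d (st' \<pi> (reflect N x)))" using rx by (simp add: rt_def)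
  also have "\<dots> = st' \<pi> (d (reflect N (st' \<pi> x)))" using c[OF x] by simp
  also have "\<dots> = st' \<pi> (reflect N (d (st' \<pi> x)))" using s sx by (simp add: symmetric_diag_def)
  also have "\<dots> = reflect N (st' \<pi> (d (st' \<pi> x)))" using c[OF brauer_in[OF bb sx]] .
  also have "\<dots> = reflect N (rt N \<pi> d x)" using x by (simp add: rt_def)
  finally show "rt N \<pi> d (reflect N x) = reflect N (rt N \<pi> d x)" .
qed

lemma rt_brauer: "inv_on N \<pi> \<Longrightarrow> brauer_diagram N d \<Longrightarrow> brauer_diagram N (rt N \<pi> d)"
  unfolding brauer_diagram_def rt_def
  by (auto simp: st_dots st_st) (metis st_dots st_st)+

lemma mv_comm: "2 \<le> p \<Longrightarrow> p \<le> 2 * n \<Longrightarrow> refl_comm (2 * n) (mvp n p)"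
  unfolding refl_comm_def using mv_refl by auto

lemma mv_fix2: "2 \<le> p \<Longrightarrow> p \<le> 2 * n \<Longrightarrow> i < p - 1 \<Longrightarrow> i < 2 * n + 1 - p \<Longrightarrow> mvp n p i = i"
  by (rule mv_fix) auto

lemma rb_D:
  assumes D: "Dj n j d" and n: "1 \<le> n" and j: "1 \<le> j" "j \<le> n" and p: "Suc j \<le> p" "p \<le> 2 * n + 1 - j"
  shows "Dj n j (rb (2 * n) (mvp n p) d)"
proof -
  have p2: "2 \<le> p" "p \<le> 2 * n" using p j by auto
  have inv: "inv_on (2 * n) (mvp n p)" by (rule mv_inv[OF n p2])
  have b: "brauer_diagram (2 * n) d" "symmetric_diag (2 * n) d" using D by (auto simp: Dj_def)
  show ?thesis unfolding Dj_def
  proof (intro conjI allI impI)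
    show "brauer_diagram (2 * n) (rb (2 * n) (mvp n p) d)" by (rule rb_brauer[OF inv b(1)])
    show "symmetric_diag (2 * n) (rb (2 * n) (mvp n p) d)" by (rule rb_sym[OF inv mv_comm[OF p2] b(2) b(1)])
    fix i assume i: "1 \<le> i \<and> i < j"
    have id: "(i, 1) \<in> dots (2 * n)" using i j by (auto simp: dots_def)
    have "mvp n p i = i" using i p j by (intro mv_fix2) auto
    thus "rb (2 * n) (mvp n p) d (i, 1) = (i, 0)"
      using id Dj_str[OF D, of i] i j by (simp add: rb_def sb_def)
  qed
qed

lemma rt_D:
  assumes D: "Dj n j d" and n: "1 \<le> n" and j: "1 \<le> j" "j \<le> n" and p: "Suc j \<le> p" "p \<le> 2 * n + 1 - j"
  shows "Dj n j (rt (2 * n) (mvp n p) d)"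
proof -
  have p2: "2 \<le> p" "p \<le> 2 * n" using p j by auto
  have inv: "inv_on (2 * n) (mvp n p)" by (rule mv_inv[OF n p2])
  have b: "brauer_diagram (2 * n) d" "symmetric_diag (2 * n) d" using D by (auto simp: Dj_def)
  show ?thesis unfolding Dj_def
  proof (intro conjI allI impI)
    show "brauer_diagram (2 * n) (rt (2 * n) (mvp n p) d)" by (rule rt_brauer[OF inv b(1)])
    show "symmetric_diag (2 * n) (rt (2 * n) (mvp n p) d)" by (rule rt_sym[OF inv mv_comm[OF p2] b(2) b(1)])
    fix i assume i: "1 \<le> i \<and> i < j"
    have id: "(i, 1) \<in> dots (2 * n)" using i j by (auto simp: dots_def)
    have "mvp n p i = i" using i p j by (intro mv_fix2) auto
    thus "rt (2 * n) (mvp n p) d (i, 1) = (i, 0)"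
      using id Dj_str[OF D, of i] i j by (simp add: rt_def st'_def)
  qed
qed

lemma Dj_flip:
  assumes D: "Dj n j d" and j: "j \<le> n + 1"
  shows "Dj n j (flipd (2 * n) d)"
proof -
  have b: "brauer_diagram (2 * n) d" "symmetric_diag (2 * n) d" using D by (auto simp: Dj_def)
  show ?thesis unfolding Dj_def
  proof (intro conjI allI impI)
    show "brauer_diagram (2 * n) (flipd (2 * n) d)" by (rule flipd_brauer[OF b(1)])
    show "symmetric_diag (2 * n) (flipd (2 * n) d)" by (rule flipd_sym[OF b])
    fix i assume i: "1 \<le> i \<and> i < j"
    have id: "(i, 1) \<in> dots (2 * n)" using i j by (auto simp: dots_def)
    thus "flipd (2 * n) d (i, 1) = (i, 0)"
      using Dj_str[OF D, of i] i j by (simp add: flipd_def fd_def)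
  qed
qed

definition ovr :: "dot set \<Rightarrow> (dot \<Rightarrow> dot) \<Rightarrow> diagram \<Rightarrow> diagram" where
  "ovr S g d = (\<lambda>x. if x \<in> S then g x else d x)"

lemma ovr_brauer:
  assumes b: "brauer_diagram N d" and S: "S \<subseteq> dots N" and cl: "\<And>x. x \<in> S \<Longrightarrow> d x \<in> S"
    and g: "\<And>x. x \<in> S \<Longrightarrow> g x \<in> S \<and> g x \<noteq> x \<and> g (g x) = x"
  shows "brauer_diagram N (ovr S g d)"
  unfolding brauer_diagram_def
proof (intro conjI ballI allI impI)
  fix x assume x: "x \<in> dots N"
  show "ovr S g d x \<in> dots N" using x S g[of x] brauer_in[OF b x] by (auto simp: ovr_def)
  show "ovr S g d x \<noteq> x" using x g[of x] brauer_ne[OF b x] by (auto simp: ovr_def)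
  show "ovr S g d (ovr S g d x) = x"
  proof (cases "x \<in> S")
    case True thus ?thesis using g[of x] by (simp add: ovr_def)
  next
    case False
    have "d x \<notin> S" using False cl brauer_inv[OF b x] by metis
    thus ?thesis using False brauer_inv[OF b x] by (simp add: ovr_def)
  qed
next
  fix x assume "x \<notin> dots N"
  thus "ovr S g d x = x" using S brauer_out[OF b] by (auto simp: ovr_def)
qed

lemma ovr_sym:
  assumes s: "symmetric_diag N d" and S: "S \<subseteq> dots N"
    and rS: "\<And>x. x \<in> S \<Longrightarrow> reflect N x \<in> S" and rg: "\<And>x. x \<in> S \<Longrightarrow> g (reflect N x) = reflect N (g x)"
  shows "symmetric_diag N (ovr S g d)"
  unfolding symmetric_diag_def
proof
  fix x assume x: "x \<in> dots N"
  show "ovr S g d (reflect N x) = reflect N (ovr S g d x)"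
  proof (cases "x \<in> S")
    case True thus ?thesis using rS rg by (simp add: ovr_def)
  next
    case False
    have "reflect N x \<notin> S" using False rS reflect_reflect[OF x] by metis
    thus ?thesis using False s x by (simp add: ovr_def symmetric_diag_def)
  qed
qed

lemma gpath:
  assumes bA: "brauer_diagram N A" and bB: "brauer_diagram N B" and x: "x \<in> dots N"
    and tx: "snd x = 1 \<Longrightarrow> A x = fd x" and w: "w = B x" and tw: "snd w = 1 \<Longrightarrow> A (fd w) = w"
  shows "(out_map x, out_map w) \<in> (comp_edges N A B)\<^sup>*"
proof -
  obtain k e where xk: "x = (k, e)" by fastforce
  have k: "e = 0 \<or> e = 1" using x xk by (auto simp: dots_def)
  have wd: "w \<in> dots N" using brauer_in[OF bB x] w by simp
  obtain q f where wq: "w = (q, f)" by fastforce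
  have q: "f = 0 \<or> f = 1" "(q, 0) \<in> dots N" using wd wq by (auto simp: dots_def)
  have tail: "(bot_map w, out_map w) \<in> (comp_edges N A B)\<^sup>*"
  proof (cases "f = 0")
    case True thus ?thesis using wq by simp
  next
    case False
    hence f: "f = 1" using q by simp
    have "A (q, 0) = (q, 1)" using tw wq f by (simp add: fd_def)
    hence "((1, q), (0, q)) \<in> comp_edges N A B" using edge1[OF q(2), where A=A and B=B] by simp
    thus ?thesis using wq f by simp
  qed
  show ?thesis
  proof (cases "e = 1")
    case True
    have "A x = (k, 0)" using tx xk True by (simp add: fd_def)
    hence e1: "((0, k), (1, k)) \<in> comp_edges N A B" using edge1[OF x, where A=A and B=B] xk True by simp
    have e2: "((1, k), bot_map w) \<in> comp_edges N A B" using edge2[OF x, where A=A and B=B] xk True w by simp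
    have ox: "out_map x = (0, k)" using xk True by (simp add: out_map_def)
    show ?thesis unfolding ox by (rule converse_rtrancl_into_rtrancl[OF e1 converse_rtrancl_into_rtrancl[OF e2 tail]])
  next
    case False
    hence e0: "e = 0" using k by simp
    have e2: "((2, k), bot_map w) \<in> comp_edges N A B" using edge2[OF x, where A=A and B=B] xk e0 w by simp
    have ox: "out_map x = (2, k)" using xk e0 by (simp add: out_map_def)
    show ?thesis unfolding ox by (rule converse_rtrancl_into_rtrancl[OF e2 tail])
  qed
qed

lemma ceq_all:
  assumes bA: "brauer_diagram N A" and bB: "brauer_diagram N B" and bd: "brauer_diagram N d"
    and P: "\<And>x. x \<in> dots N \<Longrightarrow> (out_map x, out_map (d x)) \<in> (comp_edges N A B)\<^sup>*"
  shows "compose N A B = d"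
proof
  interpret comp2 N A B using bA bB by unfold_locales
  fix x show "compose N A B x = d x"
  proof (cases "x \<in> dots N")
    case True show ?thesis using compose_eq[OF True brauer_in[OF bd True] brauer_ne[OF bd True] P[OF True]] .
  next
    case False thus ?thesis using brauer_out[OF bd False] by (simp add: compose_def)
  qed
qed

lemma Esym: "brauer_diagram N A \<Longrightarrow> brauer_diagram N B \<Longrightarrow> (a, b) \<in> (comp_edges N A B)\<^sup>* \<Longrightarrow> (b, a) \<in> (comp_edges N A B)\<^sup>*"
proof -
  assume "brauer_diagram N A" "brauer_diagram N B"
  then interpret comp2 N A B by unfold_locales
  show "(a, b) \<in> E\<^sup>* \<Longrightarrow> (b, a) \<in> E\<^sup>*" by (rule Estar_sym)
qed

lemma Wcap_Gd:
  assumes n: "1 \<le> n"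
  shows "1 \<le> j \<Longrightarrow> j \<le> n \<Longrightarrow> Cap (2 * n) j (2 * n + 1 - j) \<in> Gd n"
proof (induction "n - j" arbitrary: j)
  case 0
  hence "j = n" by simp
  thus ?case using Gd.gE[of n] E_Cap'[of "2*n" n] by simp
next
  case (Suc t)
  have j: "1 \<le> j" "j < n" using Suc by auto
  have C: "Cap (2 * n) (Suc j) (2 * n - j) \<in> Gd n" using Suc.hyps(1)[of "Suc j"] Suc j by auto
  have bC: "brauer_diagram (2 * n) (Cap (2 * n) (Suc j) (2 * n - j))" using j by (intro Cap_brauer) auto
  define \<pi> where "\<pi> = piS n j"
  have ip: "inv_on (2 * n) \<pi>" using piS_inv j \<pi>_def by simp
  have P: "Pd (2 * n) \<pi> \<in> Gd n" using piS_Gd j \<pi>_def by simp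
  have "compose (2*n) (Pd (2*n) \<pi>) (compose (2*n) (Cap (2 * n) (Suc j) (2 * n - j)) (Pd (2*n) \<pi>)) \<in> Gd n"
    using C P by (intro Gd.gc)
  moreover have "compose (2*n) (Cap (2 * n) (Suc j) (2 * n - j)) (Pd (2*n) \<pi>) = rb (2*n) \<pi> (Cap (2 * n) (Suc j) (2 * n - j))"
    by (rule compose_Pd_right[OF ip bC])
  moreover have "compose (2*n) (Pd (2*n) \<pi>) (rb (2*n) \<pi> (Cap (2 * n) (Suc j) (2 * n - j))) = rt (2*n) \<pi> (rb (2*n) \<pi> (Cap (2 * n) (Suc j) (2 * n - j)))"
    by (rule compose_Pd_left[OF ip rb_brauer[OF ip bC]])
  moreover have "rt (2*n) \<pi> (rb (2*n) \<pi> (Cap (2 * n) (Suc j) (2 * n - j))) = Cap (2 * n) (\<pi> (Suc j)) (\<pi> (2 * n - j))"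
    using j by (intro conj_Cap[OF ip]) auto
  moreover have "\<pi> (Suc j) = j" "\<pi> (2 * n - j) = 2 * n + 1 - j" using j by (auto simp: \<pi>_def piS_eq)
  ultimately show ?case by simp
qed

lemma eA: "x \<in> dots N \<Longrightarrow> A x = y \<Longrightarrow> top_map x = a \<Longrightarrow> top_map y = b \<Longrightarrow> (a, b) \<in> comp_edges N A B"
  using edge1 by blast
lemma eB: "x \<in> dots N \<Longrightarrow> B x = y \<Longrightarrow> bot_map x = a \<Longrightarrow> bot_map y = b \<Longrightarrow> (a, b) \<in> comp_edges N A B"
  using edge2 by blast

lemma tmo[simp]: "top_map (k, 1) = (0, k)" "bot_map (k, 1) = (1, k)" "out_map (k, 1) = (0, k)"
  by (auto simp: top_map_def bot_map_def out_map_def)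

lemma Cap2_simps:
  assumes "1 \<le> a" "Suc a < b" "Suc b \<le> N" "e = 0 \<or> e = 1"
  shows "Cap2 N a b (a, e) = (Suc a, e)" "Cap2 N a b (Suc a, e) = (a, e)"
    "Cap2 N a b (b, e) = (Suc b, e)" "Cap2 N a b (Suc b, e) = (b, e)"
    "1 \<le> k \<Longrightarrow> k \<le> N \<Longrightarrow> k \<noteq> a \<Longrightarrow> k \<noteq> Suc a \<Longrightarrow> k \<noteq> b \<Longrightarrow> k \<noteq> Suc b \<Longrightarrow> Cap2 N a b (k, e) = (k, 1 - e)"
  using assms by (auto simp: Cap2_def dots_def)

lemma Cap2_Gd:
  assumes "1 \<le> j" "j < n"
  shows "Cap2 (2 * n) j (2 * n - j) \<in> Gd n"
proof -
  have "compose (2*n) (E_diag (2*n) (n - (n - j))) (E_diag (2*n) (n + (n - j))) \<in> Gd n"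
    using assms by (intro Gd.gF) auto
  moreover have "n - (n - j) = j" "n + (n - j) = 2 * n - j" using assms by auto
  moreover have "compose (2*n) (E_diag (2*n) j) (E_diag (2*n) (2 * n - j)) = Cap2 (2 * n) j (2 * n - j)"
    using assms by (intro compose_EE) auto
  ultimately show ?thesis by simp
qed

context
  fixes n j :: nat
  assumes n1: "1 \<le> n" and j1: "1 \<le> j" and jn: "j \<le> n" and IH: "\<And>d. Dj n (Suc j) d \<Longrightarrow> d \<in> Gd n"
begin

lemma caseW:
  assumes D: "Dj n j d" and t: "d (j, 1) = (2 * n + 1 - j, 1)" and b: "d (j, 0) = (2 * n + 1 - j, 0)"
  shows "d \<in> Gd n"
proof -
  define M where "M = 2 * n + 1 - j"
  have jM: "j < M" "M \<le> 2 * n" "2 * n + 1 - M = j" using j1 jn by (auto simp: M_def)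
  have bd: "brauer_diagram (2 * n) d" and sd: "symmetric_diag (2 * n) d" using D by (auto simp: Dj_def)
  have dots: "(j, 1) \<in> dots (2 * n)" "(j, 0) \<in> dots (2 * n)" "(M, 1) \<in> dots (2 * n)" "(M, 0) \<in> dots (2 * n)"
    using jM j1 by (auto simp: dots_def)
  have t': "d (j, 1) = (M, 1)" and b': "d (j, 0) = (M, 0)" using t b by (auto simp: M_def)
  have dM: "d (M, 1) = (j, 1)" "d (M, 0) = (j, 0)" using brauer_inv[OF bd dots(1)] brauer_inv[OF bd dots(2)] t' b' by auto
  define S :: "dot set" where "S = {(j, 1), (j, 0), (M, 1), (M, 0)}"
  define g :: "dot \<Rightarrow> dot" where "g = (\<lambda>x. if x = (j, 1) then (j, 0) else if x = (j, 0) then (j, 1) else if x = (M, 1) then (M, 0) else (M, 1))"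
  define e where "e = ovr S g d"
  have SD: "S \<subseteq> dots (2 * n)" using dots by (auto simp: S_def)
  have be: "brauer_diagram (2 * n) e" unfolding e_def
    by (rule ovr_brauer[OF bd SD]) (use t' b' dM jM in \<open>auto simp: S_def g_def\<close>)
  have se: "symmetric_diag (2 * n) e" unfolding e_def
    by (rule ovr_sym[OF sd SD]) (use jM in \<open>auto simp: S_def g_def\<close>)
  have ev: "e (j, 1) = (j, 0)" "e (M, 1) = (M, 0)" using jM by (auto simp: e_def ovr_def S_def g_def)
  have eo: "\<And>x. x \<notin> S \<Longrightarrow> e x = d x" by (simp add: e_def ovr_def)
  have De: "Dj n (Suc j) e" unfolding Dj_def
  proof (intro conjI allI impI be se)
    fix i assume i: "1 \<le> i \<and> i < Suc j"
    show "e (i, 1) = (i, 0)"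
    proof (cases "i = j")
      case True thus ?thesis using ev by simp
    next
      case False
      hence "(i, 1) \<notin> S" using i jM by (auto simp: S_def)
      thus ?thesis using eo D i False by (simp add: Dj_def)
    qed
  qed
  have eG: "e \<in> Gd n" by (rule IH[OF De])
  have cG: "Cap (2 * n) j M \<in> Gd n" using Wcap_Gd[OF n1 j1 jn] by (simp add: M_def)
  have "compose (2 * n) (Cap (2 * n) j M) e = capres (2 * n) j M e"
    using jM j1 ev by (intro cap_lemma be) auto
  also have "\<dots> = d"
  proof (rule diag_eqI)
    fix k e' assume "(k, e') \<notin> dots (2 * n)"
    thus "capres (2 * n) j M e (k, e') = d (k, e')" using brauer_out[OF bd] by (simp add: capres_def)
  next
    fix k assume k: "1 \<le> k" "k \<le> 2 * n"
    hence kd: "(k, 0) \<in> dots (2 * n)" by (simp add: dots_def)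
    show "capres (2 * n) j M e (k, 0) = d (k, 0)"
      using kd ev eo[of "(k, 0)"] b' dM by (auto simp: capres_def S_def)
  next
    fix k assume k: "1 \<le> k" "k \<le> 2 * n"
    hence kd: "(k, Suc 0) \<in> dots (2 * n)" by (simp add: dots_def)
    show "capres (2 * n) j M e (k, Suc 0) = d (k, Suc 0)"
      using kd ev eo[of "(k, Suc 0)"] t' dM by (auto simp: capres_def S_def)
  qed
  finally show ?thesis using Gd.gc[OF cG eG] by simp
qed

lemma caseFA:
  assumes D: "Dj n j d" and jn1: "j < n" and t: "d (j, 1) = (Suc j, 1)" and b: "d (j, 0) = (p, 0)"
    and pB: "p \<noteq> 2 * n + 1 - j"
  shows "d \<in> Gd n"
proof -
  define bb where "bb = 2 * n - j"
  define B1 where "B1 = 2 * n + 1 - j"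
  define P' where "P' = 2 * n + 1 - p"
  have bd: "brauer_diagram (2 * n) d" and sd: "symmetric_diag (2 * n) d" using D by (auto simp: Dj_def)
  have jd: "(j, 0) \<in> dots (2 * n)" using j1 jn by (simp add: dots_def)
  have pr: "j \<le> p \<and> p \<le> 2 * n + 1 - j" using Dj_inner[OF D j1 _ _ _ _ b] jn by auto
  have pj: "p \<noteq> j" using brauer_ne[OF bd jd] b by auto
  have num: "j < Suc j" "Suc j < bb" "bb < B1" "B1 = Suc bb" "B1 \<le> 2 * n" "Suc j \<le> p" "p \<le> bb"
     "Suc j \<le> P'" "P' \<le> bb" "p \<noteq> P'" "1 \<le> j"
    using pr pj pB jn1 j1 unfolding bb_def B1_def P'_def by presburger+
  have rf: "2 * n + 1 - j = B1" "2 * n + 1 - Suc j = bb" "2 * n + 1 - bb = Suc j" "2 * n + 1 - B1 = j"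
     "2 * n + 1 - p = P'" "2 * n + 1 - P' = p"
    using pr pj pB jn1 j1 unfolding bb_def B1_def P'_def by presburger+
  have dts: "(j, 1) \<in> dots (2 * n)" "(j, 0) \<in> dots (2 * n)" "(B1, 1) \<in> dots (2 * n)" "(B1, 0) \<in> dots (2 * n)"
    "(Suc j, 1) \<in> dots (2 * n)" "(p, 0) \<in> dots (2 * n)" "(bb, 1) \<in> dots (2 * n)" "(P', 0) \<in> dots (2 * n)"
    "(Suc j, 0) \<in> dots (2 * n)" "(bb, 0) \<in> dots (2 * n)"
    using num by (auto simp: dots_def)
  have dv: "d (j, 1) = (Suc j, 1)" "d (j, 0) = (p, 0)" "d (B1, 1) = (bb, 1)" "d (B1, 0) = (P', 0)"
    "d (Suc j, 1) = (j, 1)" "d (p, 0) = (j, 0)" "d (bb, 1) = (B1, 1)" "d (P', 0) = (B1, 0)"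
  proof -
    show a: "d (j, 1) = (Suc j, 1)" "d (j, 0) = (p, 0)" using t b by auto
    show c: "d (B1, 1) = (bb, 1)" using Dj_refl[OF D, of j 1] a j1 jn rf by simp
    show e: "d (B1, 0) = (P', 0)" using Dj_refl[OF D, of j 0] a j1 jn rf by simp
    show "d (Suc j, 1) = (j, 1)" "d (p, 0) = (j, 0)" "d (bb, 1) = (B1, 1)" "d (P', 0) = (B1, 0)"
      using brauer_inv[OF bd dts(1)] brauer_inv[OF bd dts(2)] brauer_inv[OF bd dts(3)] brauer_inv[OF bd dts(4)] a c e
      by auto
  qed
  define S :: "dot set" where "S = {(j, 1), (j, 0), (B1, 1), (B1, 0), (Suc j, 1), (p, 0), (bb, 1), (P', 0)}"
  define g :: "dot \<Rightarrow> dot" where "g = (\<lambda>x. if x = (j, 1) then (j, 0) else if x = (j, 0) then (j, 1)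
     else if x = (B1, 1) then (B1, 0) else if x = (B1, 0) then (B1, 1) else if x = (Suc j, 1) then (p, 0)
     else if x = (p, 0) then (Suc j, 1) else if x = (bb, 1) then (P', 0) else (bb, 1))"
  define dA where "dA = ovr S g d"
  have neq: "j \<noteq> Suc j" "j \<noteq> bb" "j \<noteq> B1" "Suc j \<noteq> bb" "Suc j \<noteq> B1" "bb \<noteq> B1"
    "p \<noteq> j" "p \<noteq> B1" "P' \<noteq> j" "P' \<noteq> B1" "p \<noteq> P'" using num by auto
  have gv: "g (j, 1) = (j, 0)" "g (j, 0) = (j, 1)" "g (B1, 1) = (B1, 0)" "g (B1, 0) = (B1, 1)"
    "g (Suc j, 1) = (p, 0)" "g (p, 0) = (Suc j, 1)" "g (bb, 1) = (P', 0)" "g (P', 0) = (bb, 1)"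
    unfolding g_def using neq by simp_all
  have Sx: "\<And>x. x \<in> S \<Longrightarrow> x = (j, 1) \<or> x = (j, 0) \<or> x = (B1, 1) \<or> x = (B1, 0) \<or> x = (Suc j, 1) \<or> x = (p, 0) \<or> x = (bb, 1) \<or> x = (P', 0)"
    by (simp add: S_def)
  have Sm: "(j, 1) \<in> S" "(j, 0) \<in> S" "(B1, 1) \<in> S" "(B1, 0) \<in> S" "(Suc j, 1) \<in> S" "(p, 0) \<in> S" "(bb, 1) \<in> S" "(P', 0) \<in> S"
    by (simp_all add: S_def)
  have SD: "S \<subseteq> dots (2 * n)" using dts by (auto simp: S_def)
  have cl: "\<And>x. x \<in> S \<Longrightarrow> d x \<in> S" using Sx dv Sm by fastforce
  have be: "brauer_diagram (2 * n) dA" unfolding dA_def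
  proof (rule ovr_brauer[OF bd SD cl])
    fix x assume xS: "x \<in> S"
    show "g x \<in> S \<and> g x \<noteq> x \<and> g (g x) = x" using Sx[OF xS] gv Sm neq by (elim disjE) simp_all
  qed
  have se: "symmetric_diag (2 * n) dA" unfolding dA_def
  proof (rule ovr_sym[OF sd SD])
    fix x assume xS: "x \<in> S"
    show "reflect (2 * n) x \<in> S" using Sx[OF xS] rf Sm by (elim disjE) simp_all
    show "g (reflect (2 * n) x) = reflect (2 * n) (g x)" using Sx[OF xS] rf gv by (elim disjE) simp_all
  qed
  have av: "dA (j, 1) = (j, 0)" "dA (j, 0) = (j, 1)" "dA (Suc j, 1) = (p, 0)" "dA (B1, 0) = (B1, 1)"
     "dA (bb, 1) = (P', 0)" "dA (B1, 1) = (B1, 0)"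
    using Sm gv by (simp_all add: dA_def ovr_def)
  have ao: "\<And>x. x \<notin> S \<Longrightarrow> dA x = d x" by (simp add: dA_def ovr_def)
  have De: "Dj n (Suc j) dA" unfolding Dj_def
  proof (intro conjI allI impI be se)
    fix i assume i: "1 \<le> i \<and> i < Suc j"
    show "dA (i, 1) = (i, 0)"
    proof (cases "i = j")
      case True thus ?thesis using av by simp
    next
      case False
      hence "(i, 1) \<notin> S" using i num by (auto simp: S_def)
      thus ?thesis using ao D i False by (simp add: Dj_def)
    qed
  qed
  have aG: "dA \<in> Gd n" by (rule IH[OF De])
  define C2 where "C2 = Cap2 (2 * n) j bb"
  have cG: "C2 \<in> Gd n" using Cap2_Gd[OF j1 jn1] by (simp add: C2_def bb_def)
  have bC: "brauer_diagram (2 * n) C2" by (rule Gd_brauer[OF n1 cG])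
  have cv: "C2 (j, 0) = (Suc j, 0)" "C2 (j, 1) = (Suc j, 1)" "C2 (Suc j, 1) = (j, 1)" "C2 (B1, 0) = (bb, 0)"
     "C2 (bb, 1) = (B1, 1)" "C2 (B1, 1) = (bb, 1)"
    using dts neq num(4) by (simp_all add: C2_def Cap2_def)
  have cg: "\<And>k e. 1 \<le> k \<Longrightarrow> k \<le> 2 * n \<Longrightarrow> k \<noteq> j \<Longrightarrow> k \<noteq> Suc j \<Longrightarrow> k \<noteq> bb \<Longrightarrow> k \<noteq> B1 \<Longrightarrow> e = 0 \<or> e = 1 \<Longrightarrow> C2 (k, e) = (k, 1 - e)"
  proof -
    fix k e :: nat assume k: "1 \<le> k" "k \<le> 2 * n" "k \<noteq> j" "k \<noteq> Suc j" "k \<noteq> bb" "k \<noteq> B1" "e = 0 \<or> e = 1"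
    have "(k, e) \<in> dots (2 * n)" using k by (simp add: dots_def)
    moreover have "k \<noteq> Suc bb" using k num(4) by simp
    ultimately show "C2 (k, e) = (k, 1 - e)" using k by (simp add: C2_def Cap2_def)
  qed
  let ?E = "comp_edges (2 * n) C2 dA"
  have pa1: "((2, j), (2, p)) \<in> ?E\<^sup>*"
  proof -
    have "((2, j), (1, j)) \<in> ?E" by (rule eB[where A=C2 and B=dA, OF dts(2) av(2)]) auto
    moreover have "((1, j), (1, Suc j)) \<in> ?E" by (rule eA[where A=C2 and B=dA, OF dts(2) cv(1)]) auto
    moreover have "((1, Suc j), (2, p)) \<in> ?E" by (rule eB[where A=C2 and B=dA, OF dts(5) av(3)]) auto
    ultimately show ?thesis by (rule p3)
  qed
  have pa2: "((2, B1), (2, P')) \<in> ?E\<^sup>*"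
  proof -
    have "((2, B1), (1, B1)) \<in> ?E" by (rule eB[where A=C2 and B=dA, OF dts(4) av(4)]) auto
    moreover have "((1, B1), (1, bb)) \<in> ?E" by (rule eA[where A=C2 and B=dA, OF dts(4) cv(4)]) auto
    moreover have "((1, bb), (2, P')) \<in> ?E" by (rule eB[where A=C2 and B=dA, OF dts(7) av(5)]) auto
    ultimately show ?thesis by (rule p3)
  qed
  have P: "\<And>x. x \<in> dots (2 * n) \<Longrightarrow> (out_map x, out_map (d x)) \<in> ?E\<^sup>*"
  proof -
    fix x assume x: "x \<in> dots (2 * n)"
    show "(out_map x, out_map (d x)) \<in> ?E\<^sup>*"
    proof (cases "x \<in> S")
      case False
      obtain k e where xk: "x = (k, e)" by fastforce
      have k: "1 \<le> k" "k \<le> 2 * n" "e = 0 \<or> e = 1" using x xk by (auto simp: dots_def)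
      have wS: "d x \<notin> S" using False cl brauer_inv[OF bd x] by metis
      obtain q f where wq: "d x = (q, f)" by fastforce
      have q: "1 \<le> q" "q \<le> 2 * n" "f = 0 \<or> f = 1" using brauer_in[OF bd x] wq by (auto simp: dots_def)
      show ?thesis
      proof (rule gpath[OF bC be x])
        show "snd x = 1 \<Longrightarrow> C2 x = fd x"
        proof -
          assume "snd x = 1"
          hence "e = 1" using xk by simp
          hence "k \<noteq> j" "k \<noteq> Suc j" "k \<noteq> bb" "k \<noteq> B1" using False xk by (auto simp: S_def)
          thus ?thesis using cg[OF k(1,2)] \<open>e = 1\<close> xk by (simp add: fd_def)
        qed
        show "d x = dA x" using ao False by simp
        show "snd (d x) = 1 \<Longrightarrow> C2 (fd (d x)) = d x"
        proof -
          assume "snd (d x) = 1"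
          hence "f = 1" using wq by simp
          hence "q \<noteq> j" "q \<noteq> Suc j" "q \<noteq> bb" "q \<noteq> B1" using wS wq by (auto simp: S_def)
          thus ?thesis using cg[OF q(1,2)] \<open>f = 1\<close> wq by (simp add: fd_def)
        qed
      qed
    next
      case True
      hence "x = (j, 1) \<or> x = (j, 0) \<or> x = (B1, 1) \<or> x = (B1, 0) \<or> x = (Suc j, 1) \<or> x = (p, 0) \<or> x = (bb, 1) \<or> x = (P', 0)"
        by (simp add: S_def)
      thus ?thesis
      proof (elim disjE)
        assume xx: "x = (j, 1)"
        have "((0, j), (0, Suc j)) \<in> ?E" by (rule eA[where A=C2 and B=dA, OF dts(1) cv(2)]) auto
        thus ?thesis using xx dv by simp
      next
        assume xx: "x = (Suc j, 1)"
        have "((0, Suc j), (0, j)) \<in> ?E" by (rule eA[where A=C2 and B=dA, OF dts(5) cv(3)]) auto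
        thus ?thesis using xx dv by simp
      next
        assume xx: "x = (bb, 1)"
        have "((0, bb), (0, B1)) \<in> ?E" by (rule eA[where A=C2 and B=dA, OF dts(7) cv(5)]) auto
        thus ?thesis using xx dv by simp
      next
        assume xx: "x = (B1, 1)"
        have "((0, B1), (0, bb)) \<in> ?E" by (rule eA[where A=C2 and B=dA, OF dts(3) cv(6)]) auto
        thus ?thesis using xx dv by simp
      next
        assume xx: "x = (j, 0)" thus ?thesis using pa1 dv by simp
      next
        assume xx: "x = (B1, 0)" thus ?thesis using pa2 dv by simp
      next
        assume xx: "x = (p, 0)" thus ?thesis using Esym[OF bC be pa1] dv by simp
      next
        assume xx: "x = (P', 0)" thus ?thesis using Esym[OF bC be pa2] dv by simp
      qed
    qed
  qed
  have "compose (2 * n) C2 dA = d" by (rule ceq_all[OF bC be bd P])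
  thus ?thesis using Gd.gc[OF cG aG] by simp
qed

lemma caseFB:
  assumes D: "Dj n j d" and jn1: "j < n" and t: "d (j, 1) = (Suc j, 1)" and b: "d (j, 0) = (2 * n + 1 - j, 0)"
  shows "d \<in> Gd n"
proof -
  define bb where "bb = 2 * n - j"
  define B1 where "B1 = 2 * n + 1 - j"
  have bd: "brauer_diagram (2 * n) d" and sd: "symmetric_diag (2 * n) d" using D by (auto simp: Dj_def)
  have num: "j < Suc j" "Suc j < bb" "bb < B1" "B1 = Suc bb" "B1 \<le> 2 * n" "1 \<le> j"
    using jn1 j1 unfolding bb_def B1_def by presburger+
  have rf: "2 * n + 1 - j = B1" "2 * n + 1 - Suc j = bb" "2 * n + 1 - bb = Suc j" "2 * n + 1 - B1 = j"
    using jn1 j1 unfolding bb_def B1_def by presburger+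
  have dts: "(j, 1) \<in> dots (2 * n)" "(j, 0) \<in> dots (2 * n)" "(B1, 1) \<in> dots (2 * n)" "(B1, 0) \<in> dots (2 * n)"
    "(Suc j, 1) \<in> dots (2 * n)" "(bb, 1) \<in> dots (2 * n)" "(Suc j, 0) \<in> dots (2 * n)" "(bb, 0) \<in> dots (2 * n)"
    using num by (auto simp: dots_def)
  have dv: "d (j, 1) = (Suc j, 1)" "d (j, 0) = (B1, 0)" "d (B1, 1) = (bb, 1)" "d (B1, 0) = (j, 0)"
    "d (Suc j, 1) = (j, 1)" "d (bb, 1) = (B1, 1)"
  proof -
    show a: "d (j, 1) = (Suc j, 1)" "d (j, 0) = (B1, 0)" using t b rf by auto
    show c: "d (B1, 1) = (bb, 1)" using Dj_refl[OF D, of j 1] a j1 jn rf by simp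
    show "d (B1, 0) = (j, 0)" "d (Suc j, 1) = (j, 1)" "d (bb, 1) = (B1, 1)"
      using brauer_inv[OF bd dts(1)] brauer_inv[OF bd dts(2)] brauer_inv[OF bd dts(3)] a c
      by auto
  qed
  define S :: "dot set" where "S = {(j, 1), (j, 0), (B1, 1), (B1, 0), (Suc j, 1), (bb, 1)}"
  define g :: "dot \<Rightarrow> dot" where "g = (\<lambda>x. if x = (j, 1) then (j, 0) else if x = (j, 0) then (j, 1)
     else if x = (B1, 1) then (B1, 0) else if x = (B1, 0) then (B1, 1) else if x = (Suc j, 1) then (bb, 1)
     else (Suc j, 1))"
  define dA where "dA = ovr S g d"
  have neq: "j \<noteq> Suc j" "j \<noteq> bb" "j \<noteq> B1" "Suc j \<noteq> bb" "Suc j \<noteq> B1" "bb \<noteq> B1"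
    using num by auto
  have gv: "g (j, 1) = (j, 0)" "g (j, 0) = (j, 1)" "g (B1, 1) = (B1, 0)" "g (B1, 0) = (B1, 1)"
    "g (Suc j, 1) = (bb, 1)" "g (bb, 1) = (Suc j, 1)"
    unfolding g_def using neq by simp_all
  have Sx: "\<And>x. x \<in> S \<Longrightarrow> x = (j, 1) \<or> x = (j, 0) \<or> x = (B1, 1) \<or> x = (B1, 0) \<or> x = (Suc j, 1) \<or> x = (bb, 1)"
    by (simp add: S_def)
  have Sm: "(j, 1) \<in> S" "(j, 0) \<in> S" "(B1, 1) \<in> S" "(B1, 0) \<in> S" "(Suc j, 1) \<in> S" "(bb, 1) \<in> S"
    by (simp_all add: S_def)
  have SD: "S \<subseteq> dots (2 * n)" using dts by (auto simp: S_def)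
  have cl: "\<And>x. x \<in> S \<Longrightarrow> d x \<in> S" using Sx dv Sm by fastforce
  have be: "brauer_diagram (2 * n) dA" unfolding dA_def
  proof (rule ovr_brauer[OF bd SD cl])
    fix x assume xS: "x \<in> S"
    show "g x \<in> S \<and> g x \<noteq> x \<and> g (g x) = x" using Sx[OF xS] gv Sm neq by (elim disjE) simp_all
  qed
  have se: "symmetric_diag (2 * n) dA" unfolding dA_def
  proof (rule ovr_sym[OF sd SD])
    fix x assume xS: "x \<in> S"
    show "reflect (2 * n) x \<in> S" using Sx[OF xS] rf Sm by (elim disjE) simp_all
    show "g (reflect (2 * n) x) = reflect (2 * n) (g x)" using Sx[OF xS] rf gv by (elim disjE) simp_all
  qed
  have av: "dA (j, 1) = (j, 0)" "dA (j, 0) = (j, 1)" "dA (Suc j, 1) = (bb, 1)" "dA (B1, 0) = (B1, 1)"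
     "dA (bb, 1) = (Suc j, 1)" "dA (B1, 1) = (B1, 0)"
    using Sm gv by (simp_all add: dA_def ovr_def)
  have ao: "\<And>x. x \<notin> S \<Longrightarrow> dA x = d x" by (simp add: dA_def ovr_def)
  have De: "Dj n (Suc j) dA" unfolding Dj_def
  proof (intro conjI allI impI be se)
    fix i assume i: "1 \<le> i \<and> i < Suc j"
    show "dA (i, 1) = (i, 0)"
    proof (cases "i = j")
      case True thus ?thesis using av by simp
    next
      case False
      hence "(i, 1) \<notin> S" using i num by (auto simp: S_def)
      thus ?thesis using ao D i False by (simp add: Dj_def)
    qed
  qed
  have aG: "dA \<in> Gd n" by (rule IH[OF De])
  define C2 where "C2 = Cap2 (2 * n) j bb"
  have cG: "C2 \<in> Gd n" using Cap2_Gd[OF j1 jn1] by (simp add: C2_def bb_def)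
  have bC: "brauer_diagram (2 * n) C2" by (rule Gd_brauer[OF n1 cG])
  have cv: "C2 (j, 0) = (Suc j, 0)" "C2 (j, 1) = (Suc j, 1)" "C2 (Suc j, 1) = (j, 1)" "C2 (B1, 0) = (bb, 0)"
     "C2 (bb, 1) = (B1, 1)" "C2 (B1, 1) = (bb, 1)" "C2 (bb, 0) = (B1, 0)"
    using dts neq num(4) by (simp_all add: C2_def Cap2_def)
  have cg: "\<And>k e. 1 \<le> k \<Longrightarrow> k \<le> 2 * n \<Longrightarrow> k \<noteq> j \<Longrightarrow> k \<noteq> Suc j \<Longrightarrow> k \<noteq> bb \<Longrightarrow> k \<noteq> B1 \<Longrightarrow> e = 0 \<or> e = 1 \<Longrightarrow> C2 (k, e) = (k, 1 - e)"
  proof -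
    fix k e :: nat assume k: "1 \<le> k" "k \<le> 2 * n" "k \<noteq> j" "k \<noteq> Suc j" "k \<noteq> bb" "k \<noteq> B1" "e = 0 \<or> e = 1"
    have "(k, e) \<in> dots (2 * n)" using k by (simp add: dots_def)
    moreover have "k \<noteq> Suc bb" using k num(4) by simp
    ultimately show "C2 (k, e) = (k, 1 - e)" using k by (simp add: C2_def Cap2_def)
  qed
  let ?E = "comp_edges (2 * n) C2 dA"
  have pa1: "((2, j), (2, B1)) \<in> ?E\<^sup>*"
  proof -
    have "((2, j), (1, j)) \<in> ?E" by (rule eB[where A=C2 and B=dA, OF dts(2) av(2)]) auto
    moreover have "((1, j), (1, Suc j)) \<in> ?E" by (rule eA[where A=C2 and B=dA, OF dts(2) cv(1)]) auto
    moreover have "((1, Suc j), (1, bb)) \<in> ?E" by (rule eB[where A=C2 and B=dA, OF dts(5) av(3)]) auto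
    moreover have "((1, bb), (1, B1)) \<in> ?E" by (rule eA[where A=C2 and B=dA, OF dts(8) cv(7)]) auto
    moreover have "((1, B1), (2, B1)) \<in> ?E" by (rule eB[where A=C2 and B=dA, OF dts(3) av(6)]) auto
    ultimately show ?thesis by (rule p5)
  qed
  have P: "\<And>x. x \<in> dots (2 * n) \<Longrightarrow> (out_map x, out_map (d x)) \<in> ?E\<^sup>*"
  proof -
    fix x assume x: "x \<in> dots (2 * n)"
    show "(out_map x, out_map (d x)) \<in> ?E\<^sup>*"
    proof (cases "x \<in> S")
      case False
      obtain k e where xk: "x = (k, e)" by fastforce
      have k: "1 \<le> k" "k \<le> 2 * n" "e = 0 \<or> e = 1" using x xk by (auto simp: dots_def)
      have wS: "d x \<notin> S" using False cl brauer_inv[OF bd x] by metis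
      obtain q f where wq: "d x = (q, f)" by fastforce
      have q: "1 \<le> q" "q \<le> 2 * n" "f = 0 \<or> f = 1" using brauer_in[OF bd x] wq by (auto simp: dots_def)
      show ?thesis
      proof (rule gpath[OF bC be x])
        show "snd x = 1 \<Longrightarrow> C2 x = fd x"
        proof -
          assume "snd x = 1"
          hence "e = 1" using xk by simp
          hence "k \<noteq> j" "k \<noteq> Suc j" "k \<noteq> bb" "k \<noteq> B1" using False xk by (auto simp: S_def)
          thus ?thesis using cg[OF k(1,2)] \<open>e = 1\<close> xk by (simp add: fd_def)
        qed
        show "d x = dA x" using ao False by simp
        show "snd (d x) = 1 \<Longrightarrow> C2 (fd (d x)) = d x"
        proof -
          assume "snd (d x) = 1"
          hence "f = 1" using wq by simp
          hence "q \<noteq> j" "q \<noteq> Suc j" "q \<noteq> bb" "q \<noteq> B1" using wS wq by (auto simp: S_def)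
          thus ?thesis using cg[OF q(1,2)] \<open>f = 1\<close> wq by (simp add: fd_def)
        qed
      qed
    next
      case True
      hence "x = (j, 1) \<or> x = (j, 0) \<or> x = (B1, 1) \<or> x = (B1, 0) \<or> x = (Suc j, 1) \<or> x = (bb, 1)"
        by (simp add: S_def)
      thus ?thesis
      proof (elim disjE)
        assume xx: "x = (j, 1)"
        have "((0, j), (0, Suc j)) \<in> ?E" by (rule eA[where A=C2 and B=dA, OF dts(1) cv(2)]) auto
        thus ?thesis using xx dv by simp
      next
        assume xx: "x = (Suc j, 1)"
        have "((0, Suc j), (0, j)) \<in> ?E" by (rule eA[where A=C2 and B=dA, OF dts(5) cv(3)]) auto
        thus ?thesis using xx dv by simp
      next
        assume xx: "x = (bb, 1)"
        have "((0, bb), (0, B1)) \<in> ?E" by (rule eA[where A=C2 and B=dA, OF dts(6) cv(5)]) auto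
        thus ?thesis using xx dv by simp
      next
        assume xx: "x = (B1, 1)"
        have "((0, B1), (0, bb)) \<in> ?E" by (rule eA[where A=C2 and B=dA, OF dts(3) cv(6)]) auto
        thus ?thesis using xx dv by simp
      next
        assume xx: "x = (j, 0)" thus ?thesis using pa1 dv by simp
      next
        assume xx: "x = (B1, 0)" thus ?thesis using Esym[OF bC be pa1] dv by simp
      qed
    qed
  qed
  have "compose (2 * n) C2 dA = d" by (rule ceq_all[OF bC be bd P])
  thus ?thesis using Gd.gc[OF cG aG] by simp
qed

end

context
  fixes n j :: nat
  assumes n1: "1 \<le> n" and j1: "1 \<le> j" and jn: "j \<le> n" and IH: "\<And>d. Dj n (Suc j) d \<Longrightarrow> d \<in> Gd n"
begin

lemma caseB: "Dj n j d \<Longrightarrow> d (j, 1) = (p, 0) \<Longrightarrow> d \<in> Gd n"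
proof (induction p arbitrary: d)
  case 0
  have bd: "brauer_diagram (2 * n) d" using 0 by (simp add: Dj_def)
  have "(j, 1) \<in> dots (2 * n)" using j1 jn by (simp add: dots_def)
  from brauer_in[OF bd this] 0(2) show ?case by (simp add: dots_def)
next
  case (Suc q)
  have D: "Dj n j d" and dj: "d (j, 1) = (Suc q, 0)" using Suc by auto
  have bd: "brauer_diagram (2 * n) d" using D by (simp add: Dj_def)
  show ?case
  proof (cases "Suc q = j")
    case True
    have "Dj n (Suc j) d" using D dj True unfolding Dj_def by (auto simp: less_Suc_eq)
    thus ?thesis by (rule IH)
  next
    case False
    have pr: "j \<le> Suc q \<and> Suc q \<le> 2 * n + 1 - j" using Dj_inner[OF D j1 _ _ _ _ dj] jn by auto
    hence q: "Suc j \<le> Suc q" "Suc q \<le> 2 * n + 1 - j" "2 \<le> Suc q" "Suc q \<le> 2 * n" using False j1 by auto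
    define \<pi> where "\<pi> = mvp n (Suc q)"
    have inv: "inv_on (2 * n) \<pi>" using mv_inv[OF n1 q(3,4)] \<pi>_def by simp
    define d1 where "d1 = rb (2 * n) \<pi> d"
    have D1: "Dj n j d1" unfolding d1_def \<pi>_def by (rule rb_D[OF D n1 j1 jn q(1,2)])
    have jd: "(j, 1) \<in> dots (2 * n)" using j1 jn by (simp add: dots_def)
    have "d1 (j, 1) = (q, 0)" using jd dj mv_p[OF q(3,4)] by (simp add: d1_def rb_def sb_def \<pi>_def)
    hence G1: "d1 \<in> Gd n" using Suc.IH[OF D1] by simp
    have bd1: "brauer_diagram (2 * n) d1" using D1 by (simp add: Dj_def)
    have "d = rb (2 * n) \<pi> d1" using rb_rb[OF inv bd] by (simp add: d1_def)
    also have "\<dots> = compose (2 * n) d1 (Pd (2 * n) \<pi>)" using compose_Pd_right[OF inv bd1] by simp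
    finally show ?thesis using Gd.gc[OF G1 mv_Gd[OF q(3,4)]] \<pi>_def by simp
  qed
qed

lemma caseB': assumes D: "Dj n j d" and b: "d (j, 0) = (q, 1)" shows "d \<in> Gd n"
proof -
  have bd: "brauer_diagram (2 * n) d" using D by (simp add: Dj_def)
  have fD: "Dj n j (flipd (2 * n) d)" using Dj_flip[OF D] jn by simp
  have jd: "(j, 1) \<in> dots (2 * n)" using j1 jn by (simp add: dots_def)
  have "flipd (2 * n) d (j, 1) = (q, 0)" using jd b by (simp add: flipd_def fd_def)
  hence "flipd (2 * n) d \<in> Gd n" by (rule caseB[OF fD])
  hence "flipd (2 * n) (flipd (2 * n) d) \<in> Gd n" by (rule Gd_flip[OF n1])
  thus ?thesis using flipd_flipd[OF bd] by simp
qed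

lemma caseTop: "Dj n j d \<Longrightarrow> d (j, 1) = (q, 1) \<Longrightarrow> q \<noteq> 2 * n + 1 - j \<Longrightarrow> d (j, 0) = (p, 0) \<Longrightarrow> d \<in> Gd n"
proof (induction q arbitrary: d)
  case 0
  have bd: "brauer_diagram (2 * n) d" using 0 by (simp add: Dj_def)
  have "(j, 1) \<in> dots (2 * n)" using j1 jn by (simp add: dots_def)
  from brauer_in[OF bd this] 0(2) show ?case by (simp add: dots_def)
next
  case (Suc q)
  have D: "Dj n j d" and dj: "d (j, 1) = (Suc q, 1)" and qn: "Suc q \<noteq> 2 * n + 1 - j" and dp: "d (j, 0) = (p, 0)"
    using Suc by auto
  have bd: "brauer_diagram (2 * n) d" using D by (simp add: Dj_def)
  have jd: "(j, 1) \<in> dots (2 * n)" "(j, 0) \<in> dots (2 * n)" using j1 jn by (auto simp: dots_def)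
  have pr: "j \<le> Suc q \<and> Suc q \<le> 2 * n + 1 - j" using Dj_inner[OF D j1 _ _ _ _ dj] jn by auto
  have qj: "Suc q \<noteq> j" using brauer_ne[OF bd jd(1)] dj by auto
  show ?case
  proof (cases "Suc q = Suc j")
    case True
    have jn1: "j < n" using pr qn True by auto
    have t: "d (j, 1) = (Suc j, 1)" using dj True by simp
    show ?thesis
    proof (cases "p = 2 * n + 1 - j")
      case True thus ?thesis using caseFB[OF n1 j1 jn IH D jn1 t] dp by simp
    next
      case False thus ?thesis using caseFA[OF n1 j1 jn IH D jn1 t dp] by simp
    qed
  next
    case False
    have q: "Suc j \<le> Suc q" "Suc q \<le> 2 * n + 1 - j" "2 \<le> Suc q" "Suc q \<le> 2 * n" "Suc (Suc j) \<le> Suc q" "Suc q \<le> 2 * n - j"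
      using False pr qj qn j1 by auto
    define \<pi> where "\<pi> = mvp n (Suc q)"
    have inv: "inv_on (2 * n) \<pi>" using mv_inv[OF n1 q(3,4)] \<pi>_def by simp
    have pj: "\<pi> j = j" unfolding \<pi>_def using q by (intro mv_fix) auto
    define d1 where "d1 = rt (2 * n) \<pi> d"
    have D1: "Dj n j d1" unfolding d1_def \<pi>_def by (rule rt_D[OF D n1 j1 jn q(1,2)])
    have v1: "d1 (j, 1) = (q, 1)" using jd dj pj mv_p[OF q(3,4)] by (simp add: d1_def rt_def st'_def \<pi>_def)
    have v2: "d1 (j, 0) = (p, 0)" using jd dp by (simp add: d1_def rt_def st'_def)
    have "q \<noteq> 2 * n + 1 - j" using q by auto
    hence G1: "d1 \<in> Gd n" using Suc.IH[OF D1 v1 _ v2] by simp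
    have bd1: "brauer_diagram (2 * n) d1" using D1 by (simp add: Dj_def)
    have "d = rt (2 * n) \<pi> d1" using rt_rt[OF inv bd] by (simp add: d1_def)
    also have "\<dots> = compose (2 * n) (Pd (2 * n) \<pi>) d1" using compose_Pd_left[OF inv bd1] by simp
    finally show ?thesis using Gd.gc[OF mv_Gd[OF q(3,4)] G1] \<pi>_def by simp
  qed
qed

lemma step: assumes D: "Dj n j d" shows "d \<in> Gd n"
proof -
  have bd: "brauer_diagram (2 * n) d" using D by (simp add: Dj_def)
  have jd: "(j, 1) \<in> dots (2 * n)" "(j, 0) \<in> dots (2 * n)" using j1 jn by (auto simp: dots_def)
  obtain p f where pf: "d (j, 1) = (p, f)" by fastforce
  have f: "f = 0 \<or> f = 1" using brauer_in[OF bd jd(1)] pf by (auto simp: dots_def)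
  obtain p' f' where pf': "d (j, 0) = (p', f')" by fastforce
  have f': "f' = 0 \<or> f' = 1" using brauer_in[OF bd jd(2)] pf' by (auto simp: dots_def)
  show ?thesis
  proof (cases "f = 0")
    case True thus ?thesis using caseB[OF D] pf by simp
  next
    case False
    hence f1: "f = 1" using f by simp
    show ?thesis
    proof (cases "f' = 1")
      case True thus ?thesis using caseB'[OF D] pf' by simp
    next
      case False
      hence f0: "f' = 0" using f' by simp
      show ?thesis
      proof (cases "p = 2 * n + 1 - j")
        case False thus ?thesis using caseTop[OF D _ False] pf pf' f1 f0 by simp
      next
        case pw: True
        show ?thesis
        proof (cases "p' = 2 * n + 1 - j")
          case True thus ?thesis using caseW[OF n1 j1 jn IH D] pf pf' f1 f0 pw by simp
        next
          case False
          have fD: "Dj n j (flipd (2 * n) d)" using Dj_flip[OF D] jn by simp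
          have v1: "flipd (2 * n) d (j, 1) = (p', 1)" using jd pf' f0 by (simp add: flipd_def fd_def)
          have v2: "flipd (2 * n) d (j, 0) = (2 * n + 1 - j, 0)" using jd pf f1 pw by (simp add: flipd_def fd_def)
          have "flipd (2 * n) d \<in> Gd n" by (rule caseTop[OF fD v1 False v2])
          hence "flipd (2 * n) (flipd (2 * n) d) \<in> Gd n" by (rule Gd_flip[OF n1])
          thus ?thesis using flipd_flipd[OF bd] by simp
        qed
      qed
    qed
  qed
qed

end

lemma base_id: assumes n1: "1 \<le> n" and D: "Dj n (Suc n) d" shows "d = id_diag (2 * n)"
proof (rule diag_eqI)
  have bd: "brauer_diagram (2 * n) d" using D by (simp add: Dj_def)
  fix k e assume "(k, e) \<notin> dots (2 * n)"
  thus "d (k, e) = id_diag (2 * n) (k, e)" using brauer_out[OF bd] by (simp add: id_diag_def)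
next
  fix k assume k: "1 \<le> k" "k \<le> 2 * n"
  show "d (k, 0) = id_diag (2 * n) (k, 0)"
  proof (cases "k \<le> n")
    case True thus ?thesis using Dj_str(2)[OF D, of k] k by (simp add: id_diag_def dots_def)
  next
    case False
    define i where "i = 2 * n + 1 - k"
    have i: "1 \<le> i" "i < Suc n" "k = 2 * n + 1 - i" using False k i_def by auto
    thus ?thesis using Dj_str(4)[OF D i(1,2)] k by (simp add: id_diag_def dots_def)
  qed
  show "d (k, Suc 0) = id_diag (2 * n) (k, Suc 0)"
  proof (cases "k \<le> n")
    case True thus ?thesis using Dj_str(1)[OF D, of k] k by (simp add: id_diag_def dots_def)
  next
    case False
    define i where "i = 2 * n + 1 - k"
    have i: "1 \<le> i" "i < Suc n" "k = 2 * n + 1 - i" using False k i_def by auto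
    thus ?thesis using Dj_str(3)[OF D i(1,2)] k by (simp add: id_diag_def dots_def)
  qed
qed

lemma all_D: assumes n1: "1 \<le> n" shows "t \<le> n \<Longrightarrow> Dj n (Suc n - t) d \<Longrightarrow> d \<in> Gd n"
proof (induction t arbitrary: d)
  case 0
  hence "d = id_diag (2 * n)" using base_id[OF n1] by simp
  thus ?case using Gd.gid by simp
next
  case (Suc t)
  define j where "j = n - t"
  have j: "1 \<le> j" "j \<le> n" "Suc n - Suc t = j" "Suc n - t = Suc j" using Suc.prems(1) j_def by auto
  have IH: "\<And>d. Dj n (Suc j) d \<Longrightarrow> d \<in> Gd n" using Suc.IH Suc.prems(1) j(4) by simp
  show ?case using step[OF n1 j(1,2) IH] Suc.prems(2) j(3) by simp
qed

lemma sym_Gd: assumes n1: "1 \<le> n" and b: "brauer_diagram (2 * n) d" and s: "symmetric_diag (2 * n) d"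
  shows "d \<in> Gd n"
proof -
  have "Dj n (Suc n - n) d" using b s by (simp add: Dj_def)
  thus ?thesis using all_D[OF n1, of n] by simp
qed

lemma sym_id: "symmetric_diag N (id_diag N)"
  unfolding symmetric_diag_def by (auto simp: id_diag_def dots_def reflect_def)

lemma sym_Pd: assumes p: "inv_on N \<pi>" and r: "refl_comm N \<pi>" shows "symmetric_diag N (Pd N \<pi>)"
  unfolding symmetric_diag_def
proof
  fix x assume x: "x \<in> dots N"
  obtain k e where xk: "x = (k, e)" by fastforce
  have k: "1 \<le> k" "k \<le> N" "e = 0 \<or> e = 1" using x xk by (auto simp: dots_def)
  have "1 \<le> \<pi> k" "\<pi> k \<le> N" using p k by (auto simp: inv_on_def)
  thus "Pd N \<pi> (reflect N x) = reflect N (Pd N \<pi> x)" using k xk r by (auto simp: Pd_def dots_def refl_comm_def)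
qed

lemma sym_Cap: assumes "1 \<le> a" "a \<le> N" "b = N + 1 - a" shows "symmetric_diag N (Cap N a b)"
  unfolding symmetric_diag_def
proof
  fix x assume x: "x \<in> dots N"
  obtain k e where xk: "x = (k, e)" by fastforce
  have k: "1 \<le> k" "k \<le> N" "e = 0 \<or> e = 1" using x xk by (auto simp: dots_def)
  show "Cap N a b (reflect N x) = reflect N (Cap N a b x)" using k xk assms by (auto simp: Cap_def dots_def)
qed

lemma sym_Cap2: assumes "1 \<le> a" "Suc a < b" "b < N" "Suc b = N + 1 - a" shows "symmetric_diag N (Cap2 N a b)"
  unfolding symmetric_diag_def
proof
  fix x assume x: "x \<in> dots N"
  obtain k e where xk: "x = (k, e)" by fastforce
  have k: "1 \<le> k" "k \<le> N" "e = 0 \<or> e = 1" using x xk by (auto simp: dots_def)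
  have r: "N + 1 - a = Suc b" "N + 1 - Suc a = b" "N + 1 - b = Suc a" "N + 1 - Suc b = a" using assms by auto
  have nq: "a \<noteq> Suc a" "a \<noteq> b" "a \<noteq> Suc b" "Suc a \<noteq> b" "Suc a \<noteq> Suc b" "b \<noteq> Suc b" using assms by auto
  have dd: "(k, e) \<in> dots N" "(N + 1 - k, e) \<in> dots N" using k by (auto simp: dots_def)
  consider "k = a" | "k = Suc a" | "k = b" | "k = Suc b" | "k \<noteq> a \<and> k \<noteq> Suc a \<and> k \<noteq> b \<and> k \<noteq> Suc b" by blast
  thus "Cap2 N a b (reflect N x) = reflect N (Cap2 N a b x)"
  proof cases
    case 5
    hence "N + 1 - k \<noteq> a \<and> N + 1 - k \<noteq> Suc a \<and> N + 1 - k \<noteq> b \<and> N + 1 - k \<noteq> Suc b" using k assms by auto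
    thus ?thesis using 5 xk dd by (simp add: Cap2_def)
  qed (use xk dd r nq in \<open>simp_all add: Cap2_def\<close>)
qed

lemma Gd_sym: assumes n1: "1 \<le> n" shows "d \<in> Gd n \<Longrightarrow> symmetric_diag (2 * n) d"
proof (induction rule: Gd.induct)
  case gid thus ?case by (rule sym_id)
next
  case gR
  have "refl_comm (2 * n) (swp n)" unfolding refl_comm_def using swp_refl by auto
  thus ?case unfolding R_Pd using n1 by (intro sym_Pd swp_inv) auto
next
  case gE thus ?case unfolding E_Cap' using n1 by (intro sym_Cap) auto
next
  case (gS i)
  have a: "compose (2*n) (R_diag (2*n) (n - i)) (R_diag (2*n) (n + i)) = Pd (2*n) (\<lambda>k. swp (n + i) (swp (n - i) k))"
    using gS by (intro compose_RR) auto
  have e: "(\<lambda>k. swp (n + i) (swp (n - i) k)) = piS n (n - i)" using gS by (auto simp: piS_def)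
  have "refl_comm (2 * n) (piS n (n - i))" unfolding refl_comm_def using piS_refl[of "n - i" n] gS by auto
  thus ?case unfolding a e using gS by (intro sym_Pd piS_inv) auto
next
  case (gF i)
  have a: "compose (2*n) (E_diag (2*n) (n - i)) (E_diag (2*n) (n + i)) = Cap2 (2*n) (n - i) (n + i)"
    using gF by (intro compose_EE) auto
  thus ?case unfolding a using gF by (intro sym_Cap2) auto
next
  case (gc a b) thus ?case using compose_symmetric Gd_brauer[OF n1] by blast
qed

lemma basis_SBr: "brauer_diagram N d \<Longrightarrow> symmetric_diag N d \<Longrightarrow> basis_elem d \<in> SBr N"
  by (auto simp: SBr_def Br_def basis_elem_def)

lemma mono_SBr:
  assumes n1: "1 \<le> n"
  shows "x \<in> gen_subalg (2 * n) (phi_gens n) \<Longrightarrow> x \<in> SBr (2 * n)"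
proof (induction rule: gen_subalg.induct)
  case one thus ?case by (intro basis_SBr id_brauer sym_id)
next
  case (gen g)
  then consider "g = basis_elem (R_diag (2 * n) n)" | "g = basis_elem (E_diag (2 * n) n)"
    | i where "0 < i" "i < n" "g = br_mult (2 * n) (basis_elem (R_diag (2 * n) (n - i))) (basis_elem (R_diag (2 * n) (n + i)))"
    | i where "0 < i" "i < n" "g = br_mult (2 * n) (basis_elem (E_diag (2 * n) (n - i))) (basis_elem (E_diag (2 * n) (n + i)))"
    unfolding phi_gens_def by blast
  thus ?case
  proof cases
    case 1 thus ?thesis using Gd.gR Gd_brauer[OF n1] Gd_sym[OF n1] basis_SBr by metis
  next
    case 2 thus ?thesis using Gd.gE Gd_brauer[OF n1] Gd_sym[OF n1] basis_SBr by metis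
  next
    case 3
    let ?a = "R_diag (2 * n) (n - i)" and ?b = "R_diag (2 * n) (n + i)"
    have ba: "brauer_diagram (2 * n) ?a" "brauer_diagram (2 * n) ?b" using 3 by (auto intro: R_brauer)
    have c: "compose (2 * n) ?a ?b \<in> Gd n" using Gd.gS 3 by simp
    show ?thesis unfolding 3 br_mult_basis[OF ba] using Gd_brauer[OF n1 c] Gd_sym[OF n1 c]
      by (auto simp: SBr_def Br_def intro: lp_pow)
  next
    case 4
    let ?a = "E_diag (2 * n) (n - i)" and ?b = "E_diag (2 * n) (n + i)"
    have ba: "brauer_diagram (2 * n) ?a" "brauer_diagram (2 * n) ?b" using 4 by (auto intro: E_brauer)
    have c: "compose (2 * n) ?a ?b \<in> Gd n" using Gd.gF 4 by simp
    show ?thesis unfolding 4 br_mult_basis[OF ba] using Gd_brauer[OF n1 c] Gd_sym[OF n1 c]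
      by (auto simp: SBr_def Br_def intro: lp_pow)
  qed
next
  case (add x y)
  have X: "\<And>d. x d \<noteq> 0 \<Longrightarrow> brauer_diagram (2 * n) d \<and> symmetric_diag (2 * n) d" "\<And>d. laurent_poly (x d)"
    using add by (auto simp: SBr_def Br_def)
  have Y: "\<And>d. y d \<noteq> 0 \<Longrightarrow> brauer_diagram (2 * n) d \<and> symmetric_diag (2 * n) d" "\<And>d. laurent_poly (y d)"
    using add by (auto simp: SBr_def Br_def)
  show ?case unfolding SBr_def Br_def
  proof (intro CollectI conjI allI impI)
    fix d show "laurent_poly (x d + y d)" using X Y by (intro lp_add)
  next
    fix d assume "x d + y d \<noteq> 0"
    hence "x d \<noteq> 0 \<or> y d \<noteq> 0" by auto
    thus "brauer_diagram (2 * n) d" "symmetric_diag (2 * n) d" using X Y by auto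
  qed
next
  case (smult c x) thus ?case by (auto simp: SBr_def Br_def intro: lp_mult)
next
  case (mult x y)
  have X: "\<And>d. x d \<noteq> 0 \<Longrightarrow> brauer_diagram (2 * n) d \<and> symmetric_diag (2 * n) d" "\<And>d. laurent_poly (x d)"
    using mult by (auto simp: SBr_def Br_def)
  have Y: "\<And>d. y d \<noteq> 0 \<Longrightarrow> brauer_diagram (2 * n) d \<and> symmetric_diag (2 * n) d" "\<And>d. laurent_poly (y d)"
    using mult by (auto simp: SBr_def Br_def)
  show ?case unfolding SBr_def Br_def
  proof (intro CollectI conjI allI impI)
    fix d
    show "laurent_poly (br_mult (2 * n) x y d)" unfolding br_mult_def
    proof (rule lp_sum)
      fix p :: "diagram \<times> diagram"
      obtain d1 d2 where p: "p = (d1, d2)" by fastforce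
      have "laurent_poly (x d1 * y d2 * delta ^ loops (2 * n) d1 d2)"
        by (intro lp_mult lp_pow lp_X X(2) Y(2))
      thus "laurent_poly (case p of (d1, d2) \<Rightarrow> x d1 * y d2 * delta ^ loops (2 * n) d1 d2)" using p by simp
    qed
  next
    fix d assume ne: "br_mult (2 * n) x y d \<noteq> 0"
    let ?S = "{(d1, d2). brauer_diagram (2 * n) d1 \<and> brauer_diagram (2 * n) d2 \<and> compose (2 * n) d1 d2 = d}"
    let ?f = "\<lambda>(d1, d2). x d1 * y d2 * delta ^ loops (2 * n) d1 d2"
    have "\<exists>p\<in>?S. ?f p \<noteq> 0"
    proof (rule ccontr)
      assume "\<not> (\<exists>p\<in>?S. ?f p \<noteq> 0)"
      hence "sum ?f ?S = 0" by (intro sum.neutral) blast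
      thus False using ne unfolding br_mult_def by simp
    qed
    then obtain d1 d2 where dd: "brauer_diagram (2 * n) d1" "brauer_diagram (2 * n) d2" "compose (2 * n) d1 d2 = d"
      "x d1 * y d2 * delta ^ loops (2 * n) d1 d2 \<noteq> 0" by auto
    have "x d1 \<noteq> 0" "y d2 \<noteq> 0" using dd(4) by auto
    hence s: "symmetric_diag (2 * n) d1" "symmetric_diag (2 * n) d2" using X Y by auto
    show "brauer_diagram (2 * n) d" using compose_brauer'[OF dd(1,2)] dd(3) by simp
    show "symmetric_diag (2 * n) d" using compose_symmetric[OF dd(1,2) s] dd(3) by simp
  qed
qed

theorem mainTheorem5:
  fixes n :: nat
  assumes "n \<ge> 2"
  shows "phi_image n = SBr (2 * n)"
proof
  have n1: "1 \<le> n" using assms by simp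
  show "phi_image n \<subseteq> SBr (2 * n)" using mono_SBr[OF n1] unfolding phi_image_def by blast
  show "SBr (2 * n) \<subseteq> phi_image n"
  proof
    fix a assume a: "a \<in> SBr (2 * n)"
    have aS: "\<And>d. a d \<noteq> 0 \<Longrightarrow> brauer_diagram (2 * n) d \<and> symmetric_diag (2 * n) d" "\<And>d. laurent_poly (a d)"
      using a by (auto simp: SBr_def Br_def)
    let ?BD = "{d. brauer_diagram (2 * n) d}"
    have fin: "finite ?BD" by (rule finite_brauer)
    have zero: "(\<lambda>d'. 0) \<in> phi_image n"
    proof -
      have "(\<lambda>d. 0 * basis_elem (id_diag (2 * n)) d) \<in> phi_image n"
        unfolding phi_image_def by (rule gen_subalg.smult[OF lp_0 gen_subalg.one])
      thus ?thesis by simp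
    qed
    have tmx: "\<And>x. (\<lambda>d'. a x * basis_elem x d') \<in> phi_image n"
    proof -
      fix x
      show "(\<lambda>d'. a x * basis_elem x d') \<in> phi_image n"
      proof (cases "a x = 0")
        case True thus ?thesis using zero by simp
      next
        case False
        hence "x \<in> Gd n" using aS(1)[OF False] sym_Gd[OF n1] by blast
        hence "basis_elem x \<in> phi_image n" by (rule Gd_G[OF n1])
        thus ?thesis unfolding phi_image_def by (rule gen_subalg.smult[OF aS(2)])
      qed
    qed
    have inG: "\<And>T. finite T \<Longrightarrow> (\<lambda>d'. \<Sum>d\<in>T. a d * basis_elem d d') \<in> phi_image n"
    proof -
      fix T :: "diagram set" assume "finite T"
      thus "(\<lambda>d'. \<Sum>d\<in>T. a d * basis_elem d d') \<in> phi_image n"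
      proof (induction rule: finite_induct)
        case empty thus ?case using zero by simp
      next
        case (insert x F)
        have "(\<lambda>d'. a x * basis_elem x d' + (\<Sum>d\<in>F. a d * basis_elem d d')) \<in> phi_image n"
          using tmx[of x] insert.IH unfolding phi_image_def by (rule gen_subalg.add)
        thus ?case using insert.hyps by simp
      qed
    qed
    have "a = (\<lambda>d'. \<Sum>d\<in>?BD. a d * basis_elem d d')"
    proof
      fix d'
      have "(\<Sum>d\<in>?BD. a d * basis_elem d d') = (\<Sum>d\<in>?BD. if d' = d then a d else 0)"
        by (rule sum.cong) (auto simp: basis_elem_def)
      also have "\<dots> = (if d' \<in> ?BD then a d' else 0)" by (rule sum.delta'[OF fin])
      also have "\<dots> = a d'" using aS(1)[of d'] by auto
      finally show "a d' = (\<Sum>d\<in>?BD. a d * basis_elem d d')" by simp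
    qed
    thus "a \<in> phi_image n" using inG[OF fin] by simp
  qed
qed

end
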